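(* Let $\mathcal{A}_{ML}(\epsilon)$ be the MLMC estimator (defined in the context) for $\mathbb{E}[X]$, based on random variables $\{X_\ell\}$ satisfying Assumption A. Suppose $V_0>0$ and: (i) if $\beta=\gamma$, then $\lim_{k\to\infty}S_k=\infty$ and $$\lim_{\ell\to\infty}\mathbf{1}_{\{V_\ell>0\}}\,\mathbb{E}\Big[\frac{|\Delta_\ell X-\mathbb{E}[\Delta_\ell X]|^2}{V_\ell}\,\mathbf{1}\Big\{\frac{|\Delta_\ell X-\mathbb{E}[\Delta_\ell X]|^2}{V_\ell}>\nu\, S_\ell^2\, e^{(2\alpha-\gamma)\ell}\Big\}\Big]=0\quad\text{for all }\nu>0; \qquad (\ast)$$ (ii) if $\gamma>\beta$, then $\beta<2\alpha$, condition $(\ast)$ holds, and there exists $\upsilon\in[\beta,2\alpha)$ with $\liminf_{k\to\infty}S_k e^{(\upsilon-\gamma)k/2}>1$. (No further condition is imposed when $\beta>\gamma$.) Then $$\frac{\mathcal{A}_{ML}(\epsilon)-\mathbb{E}[X_{L(\epsilon)}]}{\sqrt{\mathrm{Var}(\mathcal{A}_{ML}(\epsilon))}}\xrightarrow{d}\mathcal{N}(0,1)\quad\text{as }\epsilon\downarrow 0.$$ In particular, if $\beta>\gamma$ and $V_0>0$, this CLT always holds.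
   Context: Let $(\Omega,\mathcal F,\mathbb P)$ be a probability space, $X\in L^2(\Omega)$ a real random variable and $\{X_\ell\}_{\ell=-1}^\infty\subset L^2(\Omega)$ with $X_{-1}:=0$. Put $\Delta_\ell X:=X_\ell-X_{\ell-1}$, $V_\ell:=\mathrm{Var}(\Delta_\ell X)$, and let $C_\ell>0$ denote the (given) cost of sampling $\Delta_\ell X$. Assumption A: there are positive constants $\alpha,\beta,\gamma$ with $\min(\beta,\gamma)\le 2\alpha$, and $c_\alpha>0$, such that for all $\ell\in\mathbb N_0$: $|\mathbb E[X-X_\ell]|\le c_\alpha e^{-\alpha\ell}$; $V_\ell\le C e^{-\beta\ell}$ for some constant $C>0$; and $c e^{\gamma\ell}<C_\ell<C' e^{\gamma\ell}$ for constants $0<c<C'$. Define $S_k:=\sum_{\ell=0}^k\sqrt{V_\ell C_\ell}$. MLMC estimator: for $\epsilon>0$, $L(\epsilon):=\max(\lceil \log(c_\alpha\epsilon^{-1})/\alpha\rceil,1)$, $M_\ell(\epsilon):=\max\big(\lceil \epsilon^{-2}\sqrt{V_\ell/C_\ell}\,S_{L(\epsilon)}\rceil,1\big)$, and $\mathcal A_{ML}(\epsilon):=\sum_{\ell=0}^{L(\epsilon)}\frac{1}{M_\ell(\epsilon)}\sum_{i=1}^{M_\ell(\epsilon)}\Delta_\ell X^i$, where the family $\{\Delta_\ell X^i\}_{\ell\in\mathbb N_0,i\in\mathbb N}$ is mutually independent and each $\Delta_\ell X^i$ has the law of $\Delta_\ell X$. Conventions: $0\cdot(\pm\infty)=0$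 and $0/0=0$. *)

theory Defs
  imports "HOL-Probability.Probability"
begin

definition dX :: "(nat \<Rightarrow> 'a \<Rightarrow> real) \<Rightarrow> nat \<Rightarrow> 'a \<Rightarrow> real" where
  "dX Xs l \<omega> = Xs l \<omega> - (if l = 0 then 0 else Xs (l - 1) \<omega>)"

definition mlmc_S :: "(nat \<Rightarrow> real) \<Rightarrow> (nat \<Rightarrow> real) \<Rightarrow> nat \<Rightarrow> real" where
  "mlmc_S V C k = (\<Sum>l\<le>k. sqrt (V l * C l))"

definition mlmc_L :: "real \<Rightarrow> real \<Rightarrow> real \<Rightarrow> nat" where
  "mlmc_L c\<alpha> \<alpha> \<epsilon> = nat (max \<lceil>ln (c\<alpha> / \<epsilon>) / \<alpha>\<rceil> 1)"

definition mlmc_M :: "(nat \<Rightarrow> real) \<Rightarrow> (nat \<Rightarrow> real) \<Rightarrow> real \<Rightarrow> real \<Rightarrow> real \<Rightarrow> nat \<Rightarrow> nat" where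
  "mlmc_M V C c\<alpha> \<alpha> \<epsilon> l =
     nat (max \<lceil>(1 / \<epsilon>\<^sup>2) * sqrt (V l / C l) * mlmc_S V C (mlmc_L c\<alpha> \<alpha> \<epsilon>)\<rceil> 1)"

text \<open>The MLMC estimator built from the independent samples D l i (i >= 1).\<close>
definition mlmc_A :: "(nat \<Rightarrow> real) \<Rightarrow> (nat \<Rightarrow> real) \<Rightarrow> real \<Rightarrow> real \<Rightarrow>
    (nat \<Rightarrow> nat \<Rightarrow> 'a \<Rightarrow> real) \<Rightarrow> real \<Rightarrow> 'a \<Rightarrow> real" where
  "mlmc_A V C c\<alpha> \<alpha> D \<epsilon> \<omega> =
     (\<Sum>l\<le>mlmc_L c\<alpha> \<alpha> \<epsilon>. (1 / real (mlmc_M V C c\<alpha> \<alpha> \<epsilon> l)) *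
        (\<Sum>i=1..mlmc_M V C c\<alpha> \<alpha> \<epsilon> l. D l i \<omega>))"

definition lindeberg_cond :: "'a measure \<Rightarrow> (nat \<Rightarrow> 'a \<Rightarrow> real) \<Rightarrow> (nat \<Rightarrow> real) \<Rightarrow>
    (nat \<Rightarrow> real) \<Rightarrow> real \<Rightarrow> real \<Rightarrow> bool" where
  "lindeberg_cond M Xs V C \<alpha> \<gamma> \<longleftrightarrow>
     (\<forall>\<nu>>0. (\<lambda>l. if V l > 0 then
         (\<integral>\<omega>. ((dX Xs l \<omega> - (\<integral>\<omega>'. dX Xs l \<omega>' \<partial>M))\<^sup>2 / V l) *
            indicator {\<omega>. (dX Xs l \<omega> - (\<integral>\<omega>'. dX Xs l \<omega>' \<partial>M))\<^sup>2 / V l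
                 > \<nu> * (mlmc_S V C l)\<^sup>2 * exp ((2 * \<alpha> - \<gamma>) * real l)} \<omega> \<partial>M)
       else 0) \<longlonglongrightarrow> 0)"

end

theory Submission
  imports Defs
begin


lemma exp_neg_approx:
  fixes x :: real assumes "x \<ge> 0"
  shows "\<bar>exp (- x) - (1 - x)\<bar> \<le> x\<^sup>2 / 2"
proof -
  have lo: "1 - x \<le> exp (- x)" using exp_ge_add_one_self[of "-x"] by simp
  have hi: "exp (- y) \<le> 1 - y + y\<^sup>2 / 2" if "y \<ge> 0" for y :: real
  proof -
    define f where "f y = 1 - y + y\<^sup>2 / 2 - exp (- y)" for y :: real
    have d: "(f has_real_derivative (-1 + z + exp (- z))) (at z)" for z
      unfolding f_def by (auto intro!: derivative_eq_intros simp: power2_eq_square)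
    have "f 0 \<le> f y"
    proof (rule DERIV_nonneg_imp_nondecreasing[OF that])
      fix z assume "0 \<le> z" "z \<le> y"
      show "\<exists>d. (f has_real_derivative d) (at z) \<and> 0 \<le> d"
        using d[of z] exp_ge_add_one_self[of "-z"] by auto
    qed
    then show ?thesis by (simp add: f_def)
  qed
  show ?thesis using lo hi[OF assms] by auto
qed

lemma (in prob_space) lindeberg_bound:
  fixes Y :: "'i \<Rightarrow> 'a \<Rightarrow> real" and t \<eta> :: real
  assumes fin: "finite I"
    and indep: "indep_vars (\<lambda>_. borel) Y I"
    and sq: "\<And>j. j \<in> I \<Longrightarrow> integrable M (\<lambda>x. (Y j x)\<^sup>2)"
    and mean: "\<And>j. j \<in> I \<Longrightarrow> expectation (Y j) = 0"
    and var1: "(\<Sum>j\<in>I. expectation (\<lambda>x. (Y j x)\<^sup>2)) = 1"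
    and eta: "\<eta> > 0"
  shows "cmod (char (distr M borel (\<lambda>x. \<Sum>j\<in>I. Y j x)) t - complex_of_real (exp (- (t\<^sup>2) / 2)))
     \<le> \<bar>t\<bar>^3 * \<eta> / 6 + t^4 * \<eta>\<^sup>2 / 8 + (t\<^sup>2 + t^4 / 8) *
        (\<Sum>j\<in>I. expectation (\<lambda>x. (Y j x)\<^sup>2 * indicator {x. \<eta> < \<bar>Y j x\<bar>} x))"
proof -
  define s where "s j = expectation (\<lambda>x. (Y j x)\<^sup>2)" for j
  define Lj where "Lj j = expectation (\<lambda>x. (Y j x)\<^sup>2 * indicator {x. \<eta> < \<bar>Y j x\<bar>} x)" for j
  define L where "L = (\<Sum>j\<in>I. Lj j)"
  have rv[measurable]: "random_variable borel (Y j)" if "j \<in> I" for j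
    using indep that unfolding indep_vars_def2 by auto
  have int1: "integrable M (Y j)" if "j \<in> I" for j
    using square_integrable_imp_integrable[OF rv[OF that] sq[OF that]] .
  have indeq: "(\<lambda>x. (Y j x)\<^sup>2 * indicator {x. \<eta> < \<bar>Y j x\<bar>} x) = (\<lambda>x. if \<eta> < \<bar>Y j x\<bar> then (Y j x)\<^sup>2 else 0)" for j
    by (auto simp: indicator_def)
  have intL: "integrable M (\<lambda>x. (Y j x)\<^sup>2 * indicator {x. \<eta> < \<bar>Y j x\<bar>} x)" if "j \<in> I" for j
    unfolding indeq
    by (rule Bochner_Integration.integrable_bound[OF sq[OF that]]) (use that in \<open>auto\<close>)
  have Lj_nn: "Lj j \<ge> 0" for j unfolding Lj_def by (rule integral_nonneg_AE) (auto simp: indicator_def)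
  have s_nn: "s j \<ge> 0" for j unfolding s_def by (rule integral_nonneg_AE) auto
  have Lj_le: "Lj j \<le> L" if "j \<in> I" for j
    unfolding L_def using fin that Lj_nn by (intro member_le_sum) auto
  have s_le: "s j \<le> \<eta>\<^sup>2 + L" if j: "j \<in> I" for j
  proof -
    have "s j \<le> expectation (\<lambda>x. \<eta>\<^sup>2 + (Y j x)\<^sup>2 * indicator {x. \<eta> < \<bar>Y j x\<bar>} x)"
      unfolding s_def
    proof (rule integral_mono)
      show "integrable M (\<lambda>x. \<eta>\<^sup>2 + (Y j x)\<^sup>2 * indicator {x. \<eta> < \<bar>Y j x\<bar>} x)"
        using intL[OF j] by auto
      fix x show "(Y j x)\<^sup>2 \<le> \<eta>\<^sup>2 + (Y j x)\<^sup>2 * indicator {x. \<eta> < \<bar>Y j x\<bar>} x"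
      proof (cases "\<eta> < \<bar>Y j x\<bar>")
        case False
        then have "\<bar>Y j x\<bar>\<^sup>2 \<le> \<eta>\<^sup>2" using eta by (intro power_mono) auto
        then show ?thesis by (simp add: indicator_def)
      qed (simp add: indicator_def)
    qed (use sq[OF j] in auto)
    also have "\<dots> = \<eta>\<^sup>2 + Lj j"
      unfolding Lj_def using intL[OF j] by (simp add: prob_space)
    finally show ?thesis using Lj_le[OF j] by simp
  qed
  have phi_bound: "cmod (char (distr M borel (Y j)) t - complex_of_real (exp (- (t\<^sup>2 * s j / 2))))
      \<le> t\<^sup>2 / 6 * (\<bar>t\<bar> * \<eta> * s j + 6 * Lj j) + (t\<^sup>2 * s j / 2)\<^sup>2 / 2" if j: "j \<in> I" for j
  proof -
    have "cmod (char (distr M borel (Y j)) t - complex_of_real (1 - t\<^sup>2 * s j / 2))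
        \<le> t\<^sup>2 / 6 * expectation (\<lambda>x. min (6 * (Y j x)\<^sup>2) (\<bar>t\<bar> * \<bar>Y j x\<bar> ^ 3))"
      by (rule char_approx3') (use j int1 sq mean in \<open>auto simp: s_def\<close>)
    also have "expectation (\<lambda>x. min (6 * (Y j x)\<^sup>2) (\<bar>t\<bar> * \<bar>Y j x\<bar> ^ 3))
        \<le> expectation (\<lambda>x. \<bar>t\<bar> * \<eta> * (Y j x)\<^sup>2 + 6 * ((Y j x)\<^sup>2 * indicator {x. \<eta> < \<bar>Y j x\<bar>} x))"
    proof (rule integral_mono)
      show "integrable M (\<lambda>x. min (6 * (Y j x)\<^sup>2) (\<bar>t\<bar> * \<bar>Y j x\<bar> ^ 3))"
        by (rule Bochner_Integration.integrable_bound[where f="\<lambda>x. 6 * (Y j x)\<^sup>2"]) (use sq[OF j] j in auto)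
      show "integrable M (\<lambda>x. \<bar>t\<bar> * \<eta> * (Y j x)\<^sup>2 + 6 * ((Y j x)\<^sup>2 * indicator {x. \<eta> < \<bar>Y j x\<bar>} x))"
        using sq[OF j] intL[OF j] by auto
      fix x
      show "min (6 * (Y j x)\<^sup>2) (\<bar>t\<bar> * \<bar>Y j x\<bar> ^ 3) \<le> \<bar>t\<bar> * \<eta> * (Y j x)\<^sup>2 + 6 * ((Y j x)\<^sup>2 * indicator {x. \<eta> < \<bar>Y j x\<bar>} x)"
      proof (cases "\<eta> < \<bar>Y j x\<bar>")
        case True
        have "min (6 * (Y j x)\<^sup>2) (\<bar>t\<bar> * \<bar>Y j x\<bar> ^ 3) \<le> 6 * (Y j x)\<^sup>2" by simp
        moreover have "0 \<le> \<bar>t\<bar> * \<eta> * (Y j x)\<^sup>2" using eta by simp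
        ultimately show ?thesis using True by (simp add: indicator_def)
      next
        case False
        have "\<bar>t\<bar> * \<bar>Y j x\<bar> ^ 3 = (\<bar>t\<bar> * (Y j x)\<^sup>2) * \<bar>Y j x\<bar>"
          by (simp add: power2_eq_square power3_eq_cube abs_mult)
        also have "\<dots> \<le> (\<bar>t\<bar> * (Y j x)\<^sup>2) * \<eta>" using False by (intro mult_left_mono) auto
        finally have "min (6 * (Y j x)\<^sup>2) (\<bar>t\<bar> * \<bar>Y j x\<bar> ^ 3) \<le> \<bar>t\<bar> * \<eta> * (Y j x)\<^sup>2"
          by (simp add: algebra_simps)
        then show ?thesis using False by (simp add: indicator_def)
      qed
    qed
    also have "\<dots> = \<bar>t\<bar> * \<eta> * s j + 6 * Lj j"
      unfolding s_def Lj_def using sq[OF j] intL[OF j] by simp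
    finally have 1: "cmod (char (distr M borel (Y j)) t - complex_of_real (1 - t\<^sup>2 * s j / 2))
        \<le> t\<^sup>2 / 6 * (\<bar>t\<bar> * \<eta> * s j + 6 * Lj j)" by (simp add: mult_left_mono)
    have 2: "cmod (complex_of_real (1 - t\<^sup>2 * s j / 2) - complex_of_real (exp (- (t\<^sup>2 * s j / 2))))
        \<le> (t\<^sup>2 * s j / 2)\<^sup>2 / 2"
      using exp_neg_approx[of "t\<^sup>2 * s j / 2"] s_nn[of j]
      by (simp del: of_real_diff add: of_real_diff[symmetric] abs_minus_commute)
    show ?thesis
      using norm_triangle_le[OF add_mono[OF 1 2]] by (simp add: algebra_simps)
  qed
  have "complex_of_real (exp (- (t\<^sup>2) / 2)) = (\<Prod>j\<in>I. complex_of_real (exp (- (t\<^sup>2 * s j / 2))))"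
  proof -
    have "- (t\<^sup>2) / 2 = (\<Sum>j\<in>I. - (t\<^sup>2 * s j / 2))"
      using var1 unfolding s_def by (simp add: sum_negf sum_divide_distrib[symmetric] sum_distrib_left[symmetric])
    then have "exp (- (t\<^sup>2) / 2) = (\<Prod>j\<in>I. exp (- (t\<^sup>2 * s j / 2)))"
      by (simp add: exp_sum[OF fin])
    then show ?thesis by simp
  qed
  moreover have "char (distr M borel (\<lambda>x. \<Sum>j\<in>I. Y j x)) t = (\<Prod>j\<in>I. char (distr M borel (Y j)) t)"
    by (rule char_distr_sum[OF indep])
  ultimately have "cmod (char (distr M borel (\<lambda>x. \<Sum>j\<in>I. Y j x)) t - complex_of_real (exp (- (t\<^sup>2) / 2)))
      \<le> (\<Sum>j\<in>I. cmod (char (distr M borel (Y j)) t - complex_of_real (exp (- (t\<^sup>2 * s j / 2)))))"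
    using s_nn
    by (auto intro!: norm_prod_diff real_distribution.cmod_char_le_1 real_distribution_distr)
  also have "\<dots> \<le> (\<Sum>j\<in>I. t\<^sup>2 / 6 * (\<bar>t\<bar> * \<eta> * s j + 6 * Lj j) + (t\<^sup>2 * s j / 2) / 2 * (t\<^sup>2 / 2 * (\<eta>\<^sup>2 + L)))"
  proof (rule sum_mono)
    fix j assume j: "j \<in> I"
    have "(t\<^sup>2 * s j / 2)\<^sup>2 / 2 = (t\<^sup>2 * s j / 2) / 2 * (t\<^sup>2 / 2 * s j)"
      by (simp add: power2_eq_square)
    also have "\<dots> \<le> (t\<^sup>2 * s j / 2) / 2 * (t\<^sup>2 / 2 * (\<eta>\<^sup>2 + L))"
      using s_le[OF j] s_nn[of j] by (intro mult_left_mono) auto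
    finally show "cmod (char (distr M borel (Y j)) t - complex_of_real (exp (- (t\<^sup>2 * s j / 2))))
      \<le> t\<^sup>2 / 6 * (\<bar>t\<bar> * \<eta> * s j + 6 * Lj j) + (t\<^sup>2 * s j / 2) / 2 * (t\<^sup>2 / 2 * (\<eta>\<^sup>2 + L))"
      using phi_bound[OF j] by linarith
  qed
  also have "\<dots> = (\<Sum>j\<in>I. (t\<^sup>2 / 6 * \<bar>t\<bar> * \<eta> + t\<^sup>2 / 4 * (t\<^sup>2 / 2 * (\<eta>\<^sup>2 + L))) * s j + t\<^sup>2 * Lj j)"
    by (rule sum.cong) (simp_all add: algebra_simps)
  also have "\<dots> = (t\<^sup>2 / 6 * \<bar>t\<bar> * \<eta> + t\<^sup>2 / 4 * (t\<^sup>2 / 2 * (\<eta>\<^sup>2 + L))) * (\<Sum>j\<in>I. s j) + t\<^sup>2 * L"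
    unfolding L_def by (simp add: sum.distrib sum_distrib_left)
  also have "\<dots> = \<bar>t\<bar>^3 * \<eta> / 6 + t^4 * \<eta>\<^sup>2 / 8 + (t\<^sup>2 + t^4 / 8) * L"
    using var1 unfolding s_def[symmetric]
    by (simp add: power2_eq_square power3_eq_cube power4_eq_xxxx algebra_simps abs_mult_self_eq)
  finally show ?thesis unfolding L_def Lj_def .
qed


theorem (in prob_space) lindeberg_clt:
  fixes Y :: "nat \<Rightarrow> 'i \<Rightarrow> 'a \<Rightarrow> real" and I :: "nat \<Rightarrow> 'i set"
  assumes fin: "\<And>n. finite (I n)"
    and indep: "\<And>n. indep_vars (\<lambda>_. borel) (Y n) (I n)"
    and sq: "\<And>n j. j \<in> I n \<Longrightarrow> integrable M (\<lambda>x. (Y n j x)\<^sup>2)"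
    and mean: "\<And>n j. j \<in> I n \<Longrightarrow> expectation (Y n j) = 0"
    and var1: "\<And>n. (\<Sum>j\<in>I n. expectation (\<lambda>x. (Y n j x)\<^sup>2)) = 1"
    and lind: "\<And>\<eta>. \<eta> > 0 \<Longrightarrow>
       (\<lambda>n. \<Sum>j\<in>I n. expectation (\<lambda>x. (Y n j x)\<^sup>2 * indicator {x. \<eta> < \<bar>Y n j x\<bar>} x)) \<longlonglongrightarrow> 0"
  shows "weak_conv_m (\<lambda>n. distr M borel (\<lambda>x. \<Sum>j\<in>I n. Y n j x)) std_normal_distribution"
proof (rule levy_continuity)
  fix n
  have [measurable]: "random_variable borel (Y n j)" if "j \<in> I n" for j
    using indep[of n] that unfolding indep_vars_def2 by auto
  then show "real_distribution (distr M borel (\<lambda>x. \<Sum>j\<in>I n. Y n j x))"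
    by (intro real_distribution_distr borel_measurable_sum) auto
next
  show "real_distribution std_normal_distribution" by (rule real_dist_normal_dist)
next
  fix t :: real
  define Lf where "Lf \<eta> n = (\<Sum>j\<in>I n. expectation (\<lambda>x. (Y n j x)\<^sup>2 * indicator {x. \<eta> < \<bar>Y n j x\<bar>} x))" for \<eta> n
  have Lf_nn: "Lf \<eta> n \<ge> 0" for \<eta> n
    unfolding Lf_def by (intro sum_nonneg integral_nonneg_AE) (auto simp: indicator_def)
  have bnd: "cmod (char (distr M borel (\<lambda>x. \<Sum>j\<in>I n. Y n j x)) t - complex_of_real (exp (- (t\<^sup>2) / 2)))
     \<le> \<bar>t\<bar>^3 * \<eta> / 6 + t^4 * \<eta>\<^sup>2 / 8 + (t\<^sup>2 + t^4 / 8) * Lf \<eta> n" if "\<eta> > 0" for \<eta> n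
    unfolding Lf_def by (rule lindeberg_bound[OF fin indep sq mean var1 that])
  show "(\<lambda>n. char (distr M borel (\<lambda>x. \<Sum>j\<in>I n. Y n j x)) t) \<longlonglongrightarrow> char std_normal_distribution t"
    unfolding char_std_normal_distribution
  proof (rule tendstoI)
    fix r :: real assume r: "r > 0"
    define c where "c = \<bar>t\<bar>^3 + t^4 + 1"
    have c: "c > 0" unfolding c_def by (simp add: add_nonneg_pos)
    define \<eta> where "\<eta> = min 1 (r / (4 * c))"
    have eta: "\<eta> > 0" "\<eta> \<le> 1" "\<eta> \<le> r / (4 * c)" using r c by (auto simp: \<eta>_def)
    have "\<bar>t\<bar>^3 * \<eta> / 6 + t^4 * \<eta>\<^sup>2 / 8 \<le> c * \<eta>"
    proof -
      have "\<eta>\<^sup>2 \<le> \<eta>" using eta by (simp add: power2_eq_square mult_le_cancel_left1)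
      then have "t^4 * \<eta>\<^sup>2 \<le> t^4 * \<eta>" by (intro mult_left_mono) auto
      then have "t^4 * \<eta>\<^sup>2 / 8 \<le> t^4 * \<eta>" 
      proof -
        have "0 \<le> t^4 * \<eta>" using eta by (simp add: zero_le_even_power)
        then show ?thesis using \<open>t^4 * \<eta>\<^sup>2 \<le> t^4 * \<eta>\<close> by linarith
      qed
      moreover have "\<bar>t\<bar>^3 * \<eta> / 6 \<le> \<bar>t\<bar>^3 * \<eta>" using eta by simp
      moreover have "c * \<eta> = \<bar>t\<bar>^3 * \<eta> + t^4 * \<eta> + \<eta>" unfolding c_def by (simp add: algebra_simps)
      ultimately show ?thesis using eta by linarith
    qed
    also have "c * \<eta> \<le> r / 4" using eta c by (simp add: field_simps)
    finally have A: "\<bar>t\<bar>^3 * \<eta> / 6 + t^4 * \<eta>\<^sup>2 / 8 \<le> r / 4" .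
    define d where "d = t\<^sup>2 + t^4 / 8 + 1"
    have d: "d > 0" unfolding d_def by (simp add: add_nonneg_pos)
    have "\<forall>\<^sub>F n in sequentially. dist (Lf \<eta> n) 0 < r / (2 * d)"
      unfolding Lf_def using tendstoD[OF lind[OF eta(1)], of "r / (2 * d)"] r d by auto
    then show "\<forall>\<^sub>F n in sequentially. dist (char (distr M borel (\<lambda>x. \<Sum>j\<in>I n. Y n j x)) t) (complex_of_real (exp (- (t\<^sup>2) / 2))) < r"
    proof eventually_elim
      case (elim n)
      have "(t\<^sup>2 + t^4 / 8) * Lf \<eta> n \<le> d * \<bar>Lf \<eta> n\<bar>"
        unfolding d_def using Lf_nn[of \<eta> n] by (intro mult_mono) auto
      also have "\<dots> \<le> d * (r / (2 * d))" using elim d by (intro mult_left_mono) (auto simp: dist_real_def)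
      also have "\<dots> = r / 2" using d by simp
      finally have "(t\<^sup>2 + t^4 / 8) * Lf \<eta> n \<le> r / 2" .
      then show ?case using bnd[OF eta(1), of n] A r unfolding dist_norm by linarith
    qed
  qed
qed



lemma (in prob_space) tail_sq_integrable:
  fixes W :: "'a \<Rightarrow> real"
  assumes [measurable]: "W \<in> borel_measurable M" and sq: "integrable M (\<lambda>x. (W x)\<^sup>2)"
  shows "integrable M (\<lambda>x. (W x)\<^sup>2 * indicator {x. c < (W x)\<^sup>2} x)"
  by (rule Bochner_Integration.integrable_bound[OF sq]) (auto simp: indicator_def)

lemma (in prob_space) tail_sq_nonneg:
  fixes W :: "'a \<Rightarrow> real"
  shows "expectation (\<lambda>x. (W x)\<^sup>2 * indicator {x. c < (W x)\<^sup>2} x) \<ge> 0"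
  by (rule integral_nonneg_AE) (auto simp: indicator_def)

lemma (in prob_space) tail_sq_le:
  fixes W :: "'a \<Rightarrow> real"
  assumes [measurable]: "W \<in> borel_measurable M" and sq: "integrable M (\<lambda>x. (W x)\<^sup>2)"
  shows "expectation (\<lambda>x. (W x)\<^sup>2 * indicator {x. c < (W x)\<^sup>2} x) \<le> expectation (\<lambda>x. (W x)\<^sup>2)"
  by (rule integral_mono[OF tail_sq_integrable[OF assms] sq]) (auto simp: indicator_def)

lemma (in prob_space) tail_sq_antimono:
  fixes W :: "'a \<Rightarrow> real"
  assumes [measurable]: "W \<in> borel_measurable M" and sq: "integrable M (\<lambda>x. (W x)\<^sup>2)"
    and "c \<le> c'"
  shows "expectation (\<lambda>x. (W x)\<^sup>2 * indicator {x. c' < (W x)\<^sup>2} x) \<le> expectation (\<lambda>x. (W x)\<^sup>2 * indicator {x. c < (W x)\<^sup>2} x)"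
  by (rule integral_mono[OF tail_sq_integrable[OF assms(1,2)] tail_sq_integrable[OF assms(1,2)]])
     (use assms(3) in \<open>auto simp: indicator_def\<close>)

lemma (in prob_space) tail_sq_tendsto:
  fixes W :: "'a \<Rightarrow> real"
  assumes [measurable]: "W \<in> borel_measurable M" and sq: "integrable M (\<lambda>x. (W x)\<^sup>2)"
  shows "((\<lambda>c. expectation (\<lambda>x. (W x)\<^sup>2 * indicator {x. c < (W x)\<^sup>2} x)) \<longlongrightarrow> 0) at_top"
proof -
  have "((\<lambda>c. expectation (\<lambda>x. (W x)\<^sup>2 * indicator {x. c < (W x)\<^sup>2} x)) \<longlongrightarrow> expectation (\<lambda>x. 0::real)) at_top"
  proof (rule integral_dominated_convergence_at_top[where w="\<lambda>x. (W x)\<^sup>2"])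
    show "AE x in M. ((\<lambda>c. (W x)\<^sup>2 * indicator {x. c < (W x)\<^sup>2} x) \<longlongrightarrow> 0) at_top"
    proof (rule AE_I2)
      fix x
      have "\<forall>\<^sub>F c in at_top. (W x)\<^sup>2 * indicator {x. c < (W x)\<^sup>2} x = (0::real)"
        using eventually_ge_at_top[of "(W x)\<^sup>2"] by eventually_elim (auto simp: indicator_def)
      then show "((\<lambda>c. (W x)\<^sup>2 * indicator {x. c < (W x)\<^sup>2} x) \<longlongrightarrow> 0) at_top"
        by (rule tendsto_eventually)
    qed
    show "\<forall>\<^sub>F c in at_top. AE x in M. norm ((W x)\<^sup>2 * indicator {x. c < (W x)\<^sup>2} x) \<le> (W x)\<^sup>2"
      by (auto simp: indicator_def)
  qed (use sq in auto)
  then show ?thesis by simp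
qed

lemma (in prob_space) law_transfer:
  fixes D Z :: "'a \<Rightarrow> real" and g :: "real \<Rightarrow> real"
  assumes [measurable]: "D \<in> borel_measurable M" "Z \<in> borel_measurable M" "g \<in> borel_measurable borel"
    and law: "distr M borel D = distr M borel Z"
  shows "integral\<^sup>L M (\<lambda>x. g (D x)) = integral\<^sup>L M (\<lambda>x. g (Z x))"
    and "integrable M (\<lambda>x. g (D x)) \<longleftrightarrow> integrable M (\<lambda>x. g (Z x))"
proof -
  have "integral\<^sup>L M (\<lambda>x. g (D x)) = integral\<^sup>L (distr M borel D) g"
    by (rule integral_distr[symmetric]) auto
  also have "\<dots> = integral\<^sup>L M (\<lambda>x. g (Z x))"
    unfolding law by (rule integral_distr) auto
  finally show "integral\<^sup>L M (\<lambda>x. g (D x)) = integral\<^sup>L M (\<lambda>x. g (Z x))" .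
  have "integrable M (\<lambda>x. g (D x)) \<longleftrightarrow> integrable (distr M borel D) g"
    by (rule integrable_distr_eq[symmetric]) auto
  also have "\<dots> \<longleftrightarrow> integrable M (\<lambda>x. g (Z x))"
    unfolding law by (rule integrable_distr_eq) auto
  finally show "integrable M (\<lambda>x. g (D x)) \<longleftrightarrow> integrable M (\<lambda>x. g (Z x))" .
qed

lemma (in prob_space) indep_sum_sq:
  fixes Z :: "'i \<Rightarrow> 'a \<Rightarrow> real"
  assumes fin: "finite I" and indep: "indep_vars (\<lambda>_. borel) Z I"
    and sq: "\<And>j. j \<in> I \<Longrightarrow> integrable M (\<lambda>x. (Z j x)\<^sup>2)"
    and mean: "\<And>j. j \<in> I \<Longrightarrow> expectation (Z j) = 0"
  shows "expectation (\<lambda>x. (\<Sum>j\<in>I. Z j x)\<^sup>2) = (\<Sum>j\<in>I. expectation (\<lambda>x. (Z j x)\<^sup>2))"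
proof -
  have rv[measurable]: "random_variable borel (Z j)" if "j \<in> I" for j
    using indep that unfolding indep_vars_def2 by auto
  have int1: "integrable M (Z j)" if "j \<in> I" for j
    using square_integrable_imp_integrable[OF rv[OF that] sq[OF that]] .
  have intp: "integrable M (\<lambda>x. Z j x * Z k x)" if "j \<in> I" "k \<in> I" for j k
  proof (rule Bochner_Integration.integrable_bound[where f="\<lambda>x. (Z j x)\<^sup>2 + (Z k x)\<^sup>2"])
    show "integrable M (\<lambda>x. (Z j x)\<^sup>2 + (Z k x)\<^sup>2)" using sq that by auto
    show "AE x in M. norm (Z j x * Z k x) \<le> norm ((Z j x)\<^sup>2 + (Z k x)\<^sup>2)"
    proof (rule AE_I2)
      fix x
      have "2 * \<bar>Z j x\<bar> * \<bar>Z k x\<bar> \<le> (Z j x)\<^sup>2 + (Z k x)\<^sup>2"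
        using sum_squares_bound[of "\<bar>Z j x\<bar>" "\<bar>Z k x\<bar>"] by simp
      moreover have "0 \<le> \<bar>Z j x\<bar> * \<bar>Z k x\<bar>" by simp
      ultimately have "\<bar>Z j x\<bar> * \<bar>Z k x\<bar> \<le> (Z j x)\<^sup>2 + (Z k x)\<^sup>2" by linarith
      then show "norm (Z j x * Z k x) \<le> norm ((Z j x)\<^sup>2 + (Z k x)\<^sup>2)"
        by (simp add: abs_mult)
    qed
  qed (use that in auto)
  have cross: "expectation (\<lambda>x. Z j x * Z k x) = (if j = k then expectation (\<lambda>x. (Z j x)\<^sup>2) else 0)"
    if "j \<in> I" "k \<in> I" for j k
  proof (cases "j = k")
    case True then show ?thesis by (simp add: power2_eq_square)
  next
    case False
    have ind2: "indep_vars (\<lambda>_. borel) Z {j, k}"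
      by (rule indep_vars_subset[OF indep]) (use that in auto)
    have "expectation (\<lambda>x. \<Prod>i\<in>{j,k}. Z i x) = (\<Prod>i\<in>{j,k}. expectation (Z i))"
      by (rule indep_vars_lebesgue_integral[OF _ ind2]) (use that int1 in auto)
    then show ?thesis using False mean that by simp
  qed
  have "expectation (\<lambda>x. (\<Sum>j\<in>I. Z j x)\<^sup>2) = expectation (\<lambda>x. \<Sum>j\<in>I. \<Sum>k\<in>I. Z j x * Z k x)"
    by (simp add: power2_eq_square sum_product)
  also have "\<dots> = (\<Sum>j\<in>I. \<Sum>k\<in>I. expectation (\<lambda>x. Z j x * Z k x))"
    using intp by (simp add: Bochner_Integration.integral_sum)
  also have "\<dots> = (\<Sum>j\<in>I. \<Sum>k\<in>I. (if j = k then expectation (\<lambda>x. (Z j x)\<^sup>2) else 0))"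
    using cross by (intro sum.cong) auto
  also have "\<dots> = (\<Sum>j\<in>I. expectation (\<lambda>x. (Z j x)\<^sup>2))"
    using fin by (simp add: sum.delta)
  finally show ?thesis .
qed

lemma ceil_nat_bounds:
  fixes a :: real assumes "a \<ge> 0"
  shows "1 \<le> nat (max \<lceil>a\<rceil> 1)" "a \<le> real (nat (max \<lceil>a\<rceil> 1))" "real (nat (max \<lceil>a\<rceil> 1)) \<le> a + 1"
proof -
  show "1 \<le> nat (max \<lceil>a\<rceil> 1)" by simp
  show "a \<le> real (nat (max \<lceil>a\<rceil> 1))"
    by (smt (verit, ccfv_SIG) le_of_int_ceiling max.cobounded1 of_int_le_iff of_nat_nat)
  show "real (nat (max \<lceil>a\<rceil> 1)) \<le> a + 1"
    using assms by (smt (verit) ceiling_correct max_def nat_1 of_int_1 of_nat_1 of_nat_nat ceiling_less_cancel)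
qed



lemma geo_tail:
  fixes q :: real assumes "0 \<le> q" "q < 1"
  shows "(\<Sum>l=m..n. q^l) \<le> q^m / (1 - q)"
proof -
  have "(\<Sum>l=m..n. q^l) = (if n < m then 0 else (q^m - q^Suc n) / (1 - q))"
    using assms by (simp add: sum_gp)
  also have "\<dots> \<le> q^m / (1 - q)" using assms by (auto simp: divide_right_mono)
  finally show ?thesis .
qed

lemma geo_exp_sum:
  fixes g :: real assumes "g > 0"
  shows "(\<Sum>l\<le>L. exp (g * real l)) \<le> exp (g * real L) / (1 - exp (- g))"
proof -
  have x: "exp g > 1" using assms by simp
  have "(\<Sum>l\<le>L. exp (g * real l)) = (\<Sum>l<Suc L. exp g ^ l)"
    by (intro sum.cong) (auto simp: exp_of_nat_mult[symmetric] mult.commute)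
  also have "\<dots> = (exp g ^ Suc L - 1) / (exp g - 1)"
    using x by (intro geometric_sum) auto
  also have "\<dots> \<le> exp g ^ Suc L / (exp g - 1)"
    using x by (intro divide_right_mono) auto
  also have "\<dots> = exp (g * real L) / (1 - exp (- g))"
    using x by (simp add: exp_of_nat_mult[symmetric] exp_minus field_simps exp_add[symmetric] distrib_left)
  finally show ?thesis .
qed

locale mlmc_an =
  fixes V C :: "nat \<Rightarrow> real" and \<alpha> \<beta> \<gamma> c\<alpha> K c0 C' :: real and \<epsilon>s :: "nat \<Rightarrow> real"
  assumes apos: "\<alpha> > 0" and bpos: "\<beta> > 0" and gpos: "\<gamma> > 0" and capos: "c\<alpha> > 0"
    and minle: "min \<beta> \<gamma> \<le> 2 * \<alpha>"
    and Vnn: "\<And>l. V l \<ge> 0" and Kpos: "K > 0" and Vb: "\<And>l. V l \<le> K * exp (- \<beta> * real l)"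
    and c0pos: "c0 > 0" and c0C: "c0 < C'"
    and Cb: "\<And>l. c0 * exp (\<gamma> * real l) < C l \<and> C l < C' * exp (\<gamma> * real l)"
    and V0: "V 0 > 0"
    and epos: "\<And>n. \<epsilon>s n > 0" and elim: "\<epsilon>s \<longlonglongrightarrow> 0"
begin

definition "L n = mlmc_L c\<alpha> \<alpha> (\<epsilon>s n)"
definition "S n = mlmc_S V C (L n)"
definition "Mn n l = mlmc_M V C c\<alpha> \<alpha> (\<epsilon>s n) l"
definition "a n l = (1 / (\<epsilon>s n)\<^sup>2) * sqrt (V l / C l) * S n"
definition "\<sigma>2 n = (\<Sum>l\<le>L n. V l / real (Mn n l))"

lemma Cpos: "C l > 0"
  using Cb[of l] c0pos by (smt (verit) exp_gt_zero mult_pos_pos)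

lemma Cle: "C l \<le> C' * exp (\<gamma> * real l)" using Cb[of l] by simp

lemma sqVC_nn: "sqrt (V l * C l) \<ge> 0" using Vnn[of l] Cpos[of l] by simp

lemma S_mono: "k \<le> k' \<Longrightarrow> mlmc_S V C k \<le> mlmc_S V C k'"
  unfolding mlmc_S_def by (rule sum_mono2) (use Vnn Cpos in \<open>auto intro: mult_nonneg_nonneg less_imp_le\<close>)

lemma S0_pos: "sqrt (V 0 * C 0) > 0" using V0 Cpos[of 0] by simp

lemma S_ge0: "mlmc_S V C k \<ge> sqrt (V 0 * C 0)"
  using S_mono[of 0 k] by (simp add: mlmc_S_def)

lemma Sn_pos: "S n > 0" using S_ge0 S0_pos unfolding S_def by (smt (verit))

lemma a_nn: "a n l \<ge> 0"
  unfolding a_def using Vnn[of l] Cpos[of l] Sn_pos[of n] by simp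

lemma Mn_eq: "Mn n l = nat (max \<lceil>a n l\<rceil> 1)"
  unfolding Mn_def mlmc_M_def a_def S_def L_def ..

lemma Mn_ge1: "1 \<le> Mn n l" and Mn_ge_a: "a n l \<le> real (Mn n l)" and Mn_le: "real (Mn n l) \<le> a n l + 1"
  using ceil_nat_bounds[OF a_nn[of n l]] unfolding Mn_eq by auto

lemma Mn_pos: "real (Mn n l) > 0" using Mn_ge1[of n l] by simp

lemma a_pos: "V l > 0 \<Longrightarrow> a n l > 0"
  unfolding a_def using Cpos[of l] Sn_pos[of n] epos[of n] by simp

lemma V_div_a: assumes "V l > 0"
  shows "V l / a n l = (\<epsilon>s n)\<^sup>2 * sqrt (V l * C l) / S n"
proof -
  have e: "\<epsilon>s n > 0" by (rule epos)
  have c: "C l > 0" by (rule Cpos)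
  have s: "S n > 0" by (rule Sn_pos)
  have "V l = sqrt (V l) * sqrt (V l)" using assms by simp
  then show ?thesis unfolding a_def using e c s assms
    by (simp add: real_sqrt_divide real_sqrt_mult field_simps)
qed

lemma V_div_a2: assumes "V l > 0"
  shows "V l / (a n l)\<^sup>2 = (\<epsilon>s n)^4 * C l / (S n)\<^sup>2"
proof -
  have e: "\<epsilon>s n > 0" by (rule epos)
  have c: "C l > 0" by (rule Cpos)
  have s: "S n > 0" by (rule Sn_pos)
  show ?thesis unfolding a_def using e c s assms
    by (simp add: real_sqrt_divide field_simps power2_eq_square power4_eq_xxxx)
qed

lemma sum_sqVC: "(\<Sum>l\<le>L n. sqrt (V l * C l)) = S n"
  unfolding S_def mlmc_S_def ..

lemma VM_le: "V l / real (Mn n l) \<le> (\<epsilon>s n)\<^sup>2 * sqrt (V l * C l) / S n"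
proof (cases "V l > 0")
  case True
  have "V l / real (Mn n l) \<le> V l / a n l"
    using True a_pos[OF True] Mn_ge_a[of n l] Mn_pos[of n l] by (intro divide_left_mono) auto
  then show ?thesis using V_div_a[OF True] by simp
next
  case False then have "V l = 0" using Vnn[of l] by simp
  then show ?thesis using sqVC_nn[of l] Sn_pos[of n] by simp
qed

lemma sigma2_ge_V0: "\<sigma>2 n \<ge> V 0 / real (Mn n 0)"
  unfolding \<sigma>2_def
  by (rule member_le_sum) (use Vnn Mn_pos in \<open>auto intro: divide_nonneg_pos\<close>)

lemma sigma2_pos: "\<sigma>2 n > 0"
  using sigma2_ge_V0[of n] V0 Mn_pos[of n 0] by (smt (verit) divide_pos_pos)

lemma sigma2_le: "\<sigma>2 n \<le> (\<epsilon>s n)\<^sup>2"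
proof -
  have "\<sigma>2 n \<le> (\<Sum>l\<le>L n. (\<epsilon>s n)\<^sup>2 * sqrt (V l * C l) / S n)"
    unfolding \<sigma>2_def by (rule sum_mono) (rule VM_le)
  also have "\<dots> = (\<epsilon>s n)\<^sup>2 * (\<Sum>l\<le>L n. sqrt (V l * C l)) / S n"
    by (simp add: sum_distrib_left sum_divide_distrib)
  also have "\<dots> = (\<epsilon>s n)\<^sup>2" using sum_sqVC[of n] Sn_pos[of n] by simp
  finally show ?thesis .
qed


lemma L_ge: assumes "\<epsilon>s n \<le> c\<alpha> * exp (- \<alpha> * real Z)" shows "Z \<le> L n"
proof -
  have e: "\<epsilon>s n > 0" by (rule epos)
  have "exp (\<alpha> * real Z) \<le> c\<alpha> / \<epsilon>s n"
    using assms e by (simp add: field_simps exp_minus)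
  then have "\<alpha> * real Z \<le> ln (c\<alpha> / \<epsilon>s n)"
    using e capos by (subst ln_ge_iff) auto
  then have "real Z \<le> ln (c\<alpha> / \<epsilon>s n) / \<alpha>" using apos by (simp add: field_simps)
  then have "real Z \<le> real_of_int \<lceil>ln (c\<alpha> / \<epsilon>s n) / \<alpha>\<rceil>"
    by (meson le_of_int_ceiling order_trans)
  then show ?thesis unfolding L_def mlmc_L_def by linarith
qed

lemma L_at_top: "filterlim L at_top sequentially"
  unfolding filterlim_at_top
proof
  fix Z :: nat
  have "c\<alpha> * exp (- \<alpha> * real Z) > 0" using capos by simp
  then have "\<forall>\<^sub>F n in sequentially. \<epsilon>s n < c\<alpha> * exp (- \<alpha> * real Z)"
    by (rule order_tendstoD(2)[OF elim])
  then show "\<forall>\<^sub>F n in sequentially. Z \<le> L n"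
    by eventually_elim (rule L_ge, simp)
qed

lemma eps_upper: assumes "\<epsilon>s n < c\<alpha>"
  shows "\<epsilon>s n < c\<alpha> * exp \<alpha> * exp (- \<alpha> * real (L n))"
proof -
  have e: "\<epsilon>s n > 0" by (rule epos)
  define x where "x = ln (c\<alpha> / \<epsilon>s n) / \<alpha>"
  have "c\<alpha> / \<epsilon>s n > 1" using assms e by simp
  then have x: "x > 0" unfolding x_def using apos by simp
  then have "\<lceil>x\<rceil> \<ge> 1" by simp
  then have "real (L n) = real_of_int \<lceil>x\<rceil>" unfolding L_def mlmc_L_def x_def[symmetric] by simp
  also have "\<dots> < x + 1" by linarith
  finally have "\<alpha> * real (L n) < ln (c\<alpha> / \<epsilon>s n) + \<alpha>" unfolding x_def using apos by (simp add: field_simps)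
  then have "exp (\<alpha> * real (L n)) < exp (ln (c\<alpha> / \<epsilon>s n) + \<alpha>)" by simp
  also have "\<dots> = c\<alpha> / \<epsilon>s n * exp \<alpha>" using e capos by (simp add: exp_add)
  finally show ?thesis using e by (simp add: field_simps exp_minus)
qed

lemma ev_eps_small: "\<forall>\<^sub>F n in sequentially. \<epsilon>s n < r" if "r > 0" for r
  by (rule order_tendstoD(2)[OF elim that])

lemma inv_eps2: assumes "\<epsilon>s n < c\<alpha>"
  shows "exp (2 * \<alpha> * real (L n)) / (c\<alpha>\<^sup>2 * exp (2 * \<alpha>)) \<le> 1 / (\<epsilon>s n)\<^sup>2"
proof -
  have e: "\<epsilon>s n > 0" by (rule epos)
  have "(\<epsilon>s n)\<^sup>2 \<le> (c\<alpha> * exp \<alpha> * exp (- \<alpha> * real (L n)))\<^sup>2"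
    using eps_upper[OF assms] e by (intro power_mono) auto
  also have "\<dots> = c\<alpha>\<^sup>2 * exp (2 * \<alpha>) / exp (2 * \<alpha> * real (L n))"
    by (simp add: power2_eq_square exp_minus field_simps flip: exp_add)
  finally show ?thesis using e capos by (simp add: field_simps)
qed


lemma sqVC_le: "sqrt (V l * C l) \<le> sqrt (K * C') * exp (- (\<beta> - \<gamma>) / 2) ^ l"
proof -
  have "V l * C l \<le> (K * exp (- \<beta> * real l)) * (C' * exp (\<gamma> * real l))"
    using Vb[of l] Cle[of l] Vnn[of l] Cpos[of l] Kpos
    by (intro mult_mono) auto
  also have "\<dots> = (K * C') * (exp (- (\<beta> - \<gamma>) / 2) ^ l)\<^sup>2"
    by (simp add: exp_of_nat_mult[symmetric] power2_eq_square algebra_simps flip: exp_add)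
  finally have "sqrt (V l * C l) \<le> sqrt ((K * C') * (exp (- (\<beta> - \<gamma>) / 2) ^ l)\<^sup>2)"
    by (rule real_sqrt_le_mono)
  also have "\<dots> = sqrt (K * C') * exp (- (\<beta> - \<gamma>) / 2) ^ l"
    by (simp add: real_sqrt_mult)
  finally show ?thesis .
qed

lemma C'pos: "C' > 0" using c0pos c0C by simp

lemma sigma2_lower_iii:
  assumes bg: "\<beta> > \<gamma>"
  shows "\<exists>\<kappa>>0. \<forall>\<^sub>F n in sequentially. \<kappa> * (\<epsilon>s n)\<^sup>2 \<le> \<sigma>2 n"
proof -
  define q where "q = exp (- (\<beta> - \<gamma>) / 2)"
  have q: "0 \<le> q" "q < 1" unfolding q_def using bg by auto
  define B where "B = sqrt (K * C') / (1 - q)"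
  have B: "B \<ge> 0" unfolding B_def using q Kpos C'pos by simp
  have SB: "S n \<le> B" for n
  proof -
    have "S n \<le> (\<Sum>l\<le>L n. sqrt (K * C') * q ^ l)"
      unfolding sum_sqVC[symmetric] q_def by (rule sum_mono) (rule sqVC_le)
    also have "\<dots> = (\<Sum>l=0..L n. sqrt (K * C') * q ^ l)" by (simp add: atLeast0AtMost)
    also have "\<dots> = sqrt (K * C') * (\<Sum>l=0..L n. q ^ l)" by (simp add: sum_distrib_left)
    also have "\<dots> \<le> sqrt (K * C') * (q ^ 0 / (1 - q))"
      using geo_tail[OF q, of 0 "L n"] Kpos C'pos by (intro mult_left_mono) auto
    finally show ?thesis unfolding B_def by simp
  qed
  define r where "r = sqrt (V 0 / C 0)"
  have r: "r \<ge> 0" unfolding r_def using V0 Cpos[of 0] by simp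
  define \<kappa> where "\<kappa> = V 0 / (r * B + 1)"
  have \<kappa>: "\<kappa> > 0" unfolding \<kappa>_def using V0 r B by (simp add: add_nonneg_pos)
  have "\<forall>\<^sub>F n in sequentially. \<epsilon>s n < 1" by (rule ev_eps_small) simp
  then have "\<forall>\<^sub>F n in sequentially. \<kappa> * (\<epsilon>s n)\<^sup>2 \<le> \<sigma>2 n"
  proof (eventually_elim)
    case (elim n)
    have e: "\<epsilon>s n > 0" by (rule epos)
    have a0: "a n 0 = r * S n / (\<epsilon>s n)\<^sup>2" unfolding a_def r_def by simp
    have "real (Mn n 0) \<le> r * S n / (\<epsilon>s n)\<^sup>2 + 1" using Mn_le[of n 0] a0 by simp
    also have "\<dots> \<le> (r * B + 1) / (\<epsilon>s n)\<^sup>2"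
    proof -
      have h0: "r * S n \<le> r * B" using SB[of n] r by (intro mult_left_mono) auto
      have h1: "1 \<le> 1 / (\<epsilon>s n)\<^sup>2" using elim e
        by (simp add: field_simps power_le_one)
      have h2: "r * S n / (\<epsilon>s n)\<^sup>2 \<le> r * B / (\<epsilon>s n)\<^sup>2"
        using h0 e by (intro divide_right_mono) auto
      show ?thesis unfolding add_divide_distrib using h1 h2 by linarith
    qed
    finally have M0: "real (Mn n 0) \<le> (r * B + 1) / (\<epsilon>s n)\<^sup>2" .
    have "\<kappa> * (\<epsilon>s n)\<^sup>2 = V 0 / ((r * B + 1) / (\<epsilon>s n)\<^sup>2)"
      unfolding \<kappa>_def using e by (simp add: field_simps)
    also have "\<dots> \<le> V 0 / real (Mn n 0)"
      using M0 Mn_pos[of n 0] V0 r B e by (intro divide_left_mono) (auto intro!: divide_pos_pos mult_pos_pos add_nonneg_pos)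
    also have "\<dots> \<le> \<sigma>2 n" by (rule sigma2_ge_V0)
    finally show ?case .
  qed
  then show ?thesis using \<kappa> by blast
qed

lemma sigma2_lower_gen:
  "\<sigma>2 n \<ge> (\<epsilon>s n)\<^sup>2 - (\<epsilon>s n)^4 * (\<Sum>l\<le>L n. C l) / (S n)\<^sup>2"
proof -
  have trm: "V l / real (Mn n l) \<ge> (\<epsilon>s n)\<^sup>2 * sqrt (V l * C l) / S n - (\<epsilon>s n)^4 * C l / (S n)\<^sup>2" for l
  proof (cases "V l > 0")
    case True
    have ap: "a n l > 0" by (rule a_pos[OF True])
    have "V l / a n l - V l / (a n l)\<^sup>2 \<le> V l / (a n l + 1)"
    proof -
      have "1 / a n l - 1 / (a n l)\<^sup>2 \<le> 1 / (a n l + 1)"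
        using ap by (simp add: field_simps power2_eq_square)
      from mult_left_mono[OF this, of "V l"] True show ?thesis by (simp add: field_simps)
    qed
    also have "\<dots> \<le> V l / real (Mn n l)"
      using Mn_le[of n l] Mn_pos[of n l] True by (intro divide_left_mono) auto
    finally show ?thesis using V_div_a[OF True] V_div_a2[OF True] by simp
  next
    case False then have "V l = 0" using Vnn[of l] by simp
    then show ?thesis using Cpos[of l] epos[of n] by simp
  qed
  have "(\<Sum>l\<le>L n. (\<epsilon>s n)\<^sup>2 * sqrt (V l * C l) / S n - (\<epsilon>s n)^4 * C l / (S n)\<^sup>2) \<le> \<sigma>2 n"
    unfolding \<sigma>2_def by (rule sum_mono) (rule trm)
  moreover have "(\<Sum>l\<le>L n. (\<epsilon>s n)\<^sup>2 * sqrt (V l * C l) / S n - (\<epsilon>s n)^4 * C l / (S n)\<^sup>2)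
     = (\<epsilon>s n)\<^sup>2 - (\<epsilon>s n)^4 * (\<Sum>l\<le>L n. C l) / (S n)\<^sup>2"
  proof -
    have 1: "(\<Sum>l\<le>L n. (\<epsilon>s n)\<^sup>2 * sqrt (V l * C l) / S n) = (\<epsilon>s n)\<^sup>2 * (\<Sum>l\<le>L n. sqrt (V l * C l)) / S n"
      by (simp add: sum_distrib_left sum_divide_distrib)
    have 2: "(\<Sum>l\<le>L n. (\<epsilon>s n)^4 * C l / (S n)\<^sup>2) = (\<epsilon>s n)^4 * (\<Sum>l\<le>L n. C l) / (S n)\<^sup>2"
      by (simp add: sum_distrib_left sum_divide_distrib)
    show ?thesis unfolding sum_subtractf 1 2 sum_sqVC using Sn_pos[of n] by simp
  qed
  ultimately show ?thesis by simp
qed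


lemma sumC_le: "(\<Sum>l\<le>k. C l) \<le> C' * exp (\<gamma> * real k) / (1 - exp (- \<gamma>))"
proof -
  have "(\<Sum>l\<le>k. C l) \<le> (\<Sum>l\<le>k. C' * exp (\<gamma> * real l))" by (rule sum_mono) (rule Cle)
  also have "\<dots> = C' * (\<Sum>l\<le>k. exp (\<gamma> * real l))" by (simp add: sum_distrib_left)
  also have "\<dots> \<le> C' * (exp (\<gamma> * real k) / (1 - exp (- \<gamma>)))"
    using geo_exp_sum[OF gpos, of k] C'pos by (intro mult_left_mono) auto
  finally show ?thesis by simp
qed

lemma sigma2_lower_i_ii:
  assumes R: "(\<lambda>k. exp ((\<gamma> - 2 * \<alpha>) * real k) / (mlmc_S V C k)\<^sup>2) \<longlonglongrightarrow> 0"
  shows "\<exists>\<kappa>>0. \<forall>\<^sub>F n in sequentially. \<kappa> * (\<epsilon>s n)\<^sup>2 \<le> \<sigma>2 n"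
proof -
  define Q where "Q = c\<alpha>\<^sup>2 * exp (2 * \<alpha>) * C' / (1 - exp (- \<gamma>))"
  have Q: "Q > 0" unfolding Q_def using capos C'pos gpos by simp
  have RL: "(\<lambda>n. exp ((\<gamma> - 2 * \<alpha>) * real (L n)) / (S n)\<^sup>2) \<longlonglongrightarrow> 0"
    unfolding S_def using filterlim_compose[OF R L_at_top] by (simp add: o_def)
  have ev1: "\<forall>\<^sub>F n in sequentially. exp ((\<gamma> - 2 * \<alpha>) * real (L n)) / (S n)\<^sup>2 < 1 / (2 * Q)"
    using Q by (intro order_tendstoD(2)[OF RL]) simp
  have ev2: "\<forall>\<^sub>F n in sequentially. \<epsilon>s n < c\<alpha>" by (rule ev_eps_small[OF capos])
  have "\<forall>\<^sub>F n in sequentially. 1 / 2 * (\<epsilon>s n)\<^sup>2 \<le> \<sigma>2 n"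
    using ev1 ev2
  proof eventually_elim
    case (elim n)
    have e: "\<epsilon>s n > 0" by (rule epos)
    have Sp: "S n > 0" by (rule Sn_pos)
    have e2: "(\<epsilon>s n)\<^sup>2 \<le> c\<alpha>\<^sup>2 * exp (2 * \<alpha>) / exp (2 * \<alpha> * real (L n))"
      using inv_eps2[OF elim(2)] e capos by (simp add: field_simps)
    have sc: "(\<Sum>l\<le>L n. C l) \<le> C' * exp (\<gamma> * real (L n)) / (1 - exp (- \<gamma>))" by (rule sumC_le)
    have sc0: "(\<Sum>l\<le>L n. C l) \<ge> 0" using Cpos by (simp add: sum_nonneg less_imp_le)
    have "(\<epsilon>s n)\<^sup>2 * (\<Sum>l\<le>L n. C l) \<le> (c\<alpha>\<^sup>2 * exp (2 * \<alpha>) / exp (2 * \<alpha> * real (L n))) * (C' * exp (\<gamma> * real (L n)) / (1 - exp (- \<gamma>)))"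
      using e2 sc sc0 by (intro mult_mono) auto
    also have "\<dots> = Q * exp ((\<gamma> - 2 * \<alpha>) * real (L n))"
      unfolding Q_def by (simp add: field_simps exp_diff left_diff_distrib)
    finally have 1: "(\<epsilon>s n)\<^sup>2 * (\<Sum>l\<le>L n. C l) / (S n)\<^sup>2 \<le> Q * (exp ((\<gamma> - 2 * \<alpha>) * real (L n)) / (S n)\<^sup>2)"
      using Sp by (simp add: divide_right_mono)
    also have "\<dots> \<le> Q * (1 / (2 * Q))" using elim(1) Q by (intro mult_left_mono) auto
    also have "\<dots> = 1 / 2" using Q by simp
    finally have 2: "(\<epsilon>s n)\<^sup>2 * (\<Sum>l\<le>L n. C l) / (S n)\<^sup>2 \<le> 1 / 2" .
    have "(\<epsilon>s n)^4 * (\<Sum>l\<le>L n. C l) / (S n)\<^sup>2 = (\<epsilon>s n)\<^sup>2 * ((\<epsilon>s n)\<^sup>2 * (\<Sum>l\<le>L n. C l) / (S n)\<^sup>2)"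
      by (simp add: power4_eq_xxxx power2_eq_square)
    also have "\<dots> \<le> (\<epsilon>s n)\<^sup>2 * (1 / 2)" using 2 by (intro mult_left_mono) auto
    finally show ?case using sigma2_lower_gen[of n] by simp
  qed
  then show ?thesis by (intro exI[of _ "1/2"]) auto
qed


definition "Tm G \<eta> n l = G l (\<eta>\<^sup>2 * (real (Mn n l))\<^sup>2 * \<sigma>2 n) / (real (Mn n l) * \<sigma>2 n)"

lemma a_eps: "a n l * (\<epsilon>s n)\<^sup>2 = sqrt (V l / C l) * S n"
  unfolding a_def using epos[of n] by simp

lemma a2_eps: "(a n l)\<^sup>2 * (\<epsilon>s n)\<^sup>2 = (V l / C l) * (S n)\<^sup>2 / (\<epsilon>s n)\<^sup>2"
  unfolding a_def using epos[of n] Vnn[of l] Cpos[of l]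
  by (simp add: power2_eq_square field_simps)

lemma thr_lower:
  assumes "\<kappa> > 0" "\<kappa> * (\<epsilon>s n)\<^sup>2 \<le> \<sigma>2 n"
  shows "\<eta>\<^sup>2 * \<kappa> * (V l / C l) * (S n)\<^sup>2 / (\<epsilon>s n)\<^sup>2 \<le> \<eta>\<^sup>2 * (real (Mn n l))\<^sup>2 * \<sigma>2 n"
proof -
  have "(a n l)\<^sup>2 \<le> (real (Mn n l))\<^sup>2" using Mn_ge_a[of n l] a_nn[of n l] by (intro power_mono) auto
  then have "(a n l)\<^sup>2 * (\<kappa> * (\<epsilon>s n)\<^sup>2) \<le> (real (Mn n l))\<^sup>2 * \<sigma>2 n"
    using assms by (intro mult_mono) auto
  then have "\<eta>\<^sup>2 * ((a n l)\<^sup>2 * (\<kappa> * (\<epsilon>s n)\<^sup>2)) \<le> \<eta>\<^sup>2 * ((real (Mn n l))\<^sup>2 * \<sigma>2 n)"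
    by (intro mult_left_mono) auto
  moreover have "\<eta>\<^sup>2 * \<kappa> * (V l / C l) * (S n)\<^sup>2 / (\<epsilon>s n)\<^sup>2 = \<eta>\<^sup>2 * ((a n l)\<^sup>2 * (\<kappa> * (\<epsilon>s n)\<^sup>2))"
  proof -
    have "\<eta>\<^sup>2 * \<kappa> * (V l / C l) * (S n)\<^sup>2 / (\<epsilon>s n)\<^sup>2 = \<eta>\<^sup>2 * \<kappa> * ((V l / C l) * (S n)\<^sup>2 / (\<epsilon>s n)\<^sup>2)" by simp
    also have "\<dots> = \<eta>\<^sup>2 * \<kappa> * ((a n l)\<^sup>2 * (\<epsilon>s n)\<^sup>2)" using a2_eps[of n l] by simp
    finally show ?thesis by (simp add: algebra_simps)
  qed
  ultimately show ?thesis by simp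
qed

lemma Msig_lower:
  assumes "\<kappa> > 0" "\<kappa> * (\<epsilon>s n)\<^sup>2 \<le> \<sigma>2 n"
  shows "\<kappa> * sqrt (V l / C l) * S n \<le> real (Mn n l) * \<sigma>2 n"
proof -
  have "a n l * (\<kappa> * (\<epsilon>s n)\<^sup>2) \<le> real (Mn n l) * \<sigma>2 n"
    using assms Mn_ge_a[of n l] a_nn[of n l] by (intro mult_mono) auto
  then show ?thesis using a_eps[of n l] by (simp add: algebra_simps)
qed

lemma Tm_nonneg:
  assumes Gnn: "\<And>l c. G l c \<ge> 0" shows "Tm G \<eta> n l \<ge> 0"
  unfolding Tm_def using Gnn Mn_pos[of n l] sigma2_pos[of n] by simp

lemma Tm_zero:
  assumes Gnn: "\<And>l c. G l c \<ge> 0" and GV: "\<And>l c. G l c \<le> V l" and "\<not> V l > 0"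
  shows "Tm G \<eta> n l = 0"
proof -
  have "V l = 0" using assms(3) Vnn[of l] by simp
  then have "G l c = 0" for c using Gnn[of l c] GV[of l c] by simp
  then show ?thesis unfolding Tm_def by simp
qed

lemma Tm_small:
  assumes Gnn: "\<And>l c. G l c \<ge> 0" and GV: "\<And>l c. G l c \<le> V l"
    and Gmono: "\<And>l c c'. c \<le> c' \<Longrightarrow> G l c' \<le> G l c"
    and k: "\<kappa> > 0" "\<kappa> * (\<epsilon>s n)\<^sup>2 \<le> \<sigma>2 n"
  shows "Tm G \<eta> n l \<le> (if V l > 0 then G l (\<eta>\<^sup>2 * \<kappa> * (V l / C l) * (sqrt (V 0 * C 0))\<^sup>2 / (\<epsilon>s n)\<^sup>2)
            / (\<kappa> * sqrt (V l / C l) * sqrt (V 0 * C 0)) else 0)"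
proof (cases "V l > 0")
  case False then show ?thesis using Tm_zero[OF Gnn GV False] by simp
next
  case True
  define s0 where "s0 = sqrt (V 0 * C 0)"
  have s0: "s0 > 0" "s0 \<le> S n" unfolding s0_def S_def using S0_pos S_ge0 by auto
  have vc: "V l / C l > 0" using True Cpos[of l] by simp
  have e: "\<epsilon>s n > 0" by (rule epos)
  have "\<eta>\<^sup>2 * \<kappa> * (V l / C l) * s0\<^sup>2 / (\<epsilon>s n)\<^sup>2 \<le> \<eta>\<^sup>2 * \<kappa> * (V l / C l) * (S n)\<^sup>2 / (\<epsilon>s n)\<^sup>2"
  proof -
    have "0 \<le> \<eta>\<^sup>2 * \<kappa> * (V l / C l)" using k vc by (intro mult_nonneg_nonneg) auto
    then show ?thesis using s0 e by (intro divide_right_mono mult_left_mono power_mono) auto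
  qed
  also have "\<dots> \<le> \<eta>\<^sup>2 * (real (Mn n l))\<^sup>2 * \<sigma>2 n" by (rule thr_lower[OF k])
  finally have G1: "G l (\<eta>\<^sup>2 * (real (Mn n l))\<^sup>2 * \<sigma>2 n) \<le> G l (\<eta>\<^sup>2 * \<kappa> * (V l / C l) * s0\<^sup>2 / (\<epsilon>s n)\<^sup>2)"
    by (rule Gmono)
  have "\<kappa> * sqrt (V l / C l) * s0 \<le> \<kappa> * sqrt (V l / C l) * S n"
    using s0 k vc by (intro mult_left_mono) auto
  also have "\<dots> \<le> real (Mn n l) * \<sigma>2 n" by (rule Msig_lower[OF k])
  finally have D1: "\<kappa> * sqrt (V l / C l) * s0 \<le> real (Mn n l) * \<sigma>2 n" .
  have D0: "\<kappa> * sqrt (V l / C l) * s0 > 0" using k vc s0 by simp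
  have "Tm G \<eta> n l \<le> G l (\<eta>\<^sup>2 * \<kappa> * (V l / C l) * s0\<^sup>2 / (\<epsilon>s n)\<^sup>2) / (real (Mn n l) * \<sigma>2 n)"
    unfolding Tm_def using G1 Mn_pos[of n l] sigma2_pos[of n] by (intro divide_right_mono) auto
  also have "\<dots> \<le> G l (\<eta>\<^sup>2 * \<kappa> * (V l / C l) * s0\<^sup>2 / (\<epsilon>s n)\<^sup>2) / (\<kappa> * sqrt (V l / C l) * s0)"
    using D0 D1 Gnn by (intro divide_left_mono) auto
  finally show ?thesis using True unfolding s0_def by simp
qed


lemma lind_combine:
  assumes Gnn: "\<And>l c. G l c \<ge> 0" and GV: "\<And>l c. G l c \<le> V l"
    and Gmono: "\<And>l c c'. c \<le> c' \<Longrightarrow> G l c' \<le> G l c"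
    and Glim: "\<And>l. (G l \<longlongrightarrow> 0) at_top"
    and k: "\<kappa> > 0" "\<forall>\<^sub>F n in sequentially. \<kappa> * (\<epsilon>s n)\<^sup>2 \<le> \<sigma>2 n"
    and eta: "\<eta> > 0"
    and tail: "\<And>\<delta>. \<delta> > 0 \<Longrightarrow> \<exists>l0. \<forall>\<^sub>F n in sequentially. (\<Sum>l=l0..L n. Tm G \<eta> n l) \<le> \<delta>"
  shows "(\<lambda>n. \<Sum>l\<le>L n. Tm G \<eta> n l) \<longlonglongrightarrow> 0"
proof (rule tendstoI)
  fix \<delta> :: real assume d: "\<delta> > 0"
  obtain l0 where l0: "\<forall>\<^sub>F n in sequentially. (\<Sum>l=l0..L n. Tm G \<eta> n l) \<le> \<delta> / 3"
    using tail[of "\<delta> / 3"] d by auto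
  define s0 where "s0 = sqrt (V 0 * C 0)"
  define U where "U n l = (if V l > 0 then G l (\<eta>\<^sup>2 * \<kappa> * (V l / C l) * s0\<^sup>2 / (\<epsilon>s n)\<^sup>2)
            / (\<kappa> * sqrt (V l / C l) * s0) else 0)" for n l
  have s0: "s0 > 0" unfolding s0_def using S0_pos by simp
  have U_nn: "U n l \<ge> 0" for n l
    unfolding U_def using Gnn k s0 Vnn Cpos by (auto intro!: divide_nonneg_pos)
  have Ulim: "(\<lambda>n. U n l) \<longlonglongrightarrow> 0" for l
  proof (cases "V l > 0")
    case False then show ?thesis unfolding U_def by simp
  next
    case True
    define \<rho> where "\<rho> = \<eta>\<^sup>2 * \<kappa> * (V l / C l) * s0\<^sup>2"
    have \<rho>: "\<rho> > 0" unfolding \<rho>_def using True Cpos[of l] k s0 eta by (intro mult_pos_pos divide_pos_pos) auto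
    have "filterlim (\<lambda>n. inverse ((\<epsilon>s n)\<^sup>2)) at_top sequentially"
    proof (rule filterlim_inverse_at_top)
      show "(\<lambda>n. (\<epsilon>s n)\<^sup>2) \<longlonglongrightarrow> 0" using tendsto_power[OF elim, of 2] by simp
      show "\<forall>\<^sub>F n in sequentially. 0 < (\<epsilon>s n)\<^sup>2" using epos by (intro always_eventually) (auto simp: less_imp_neq[symmetric])
    qed
    then have "filterlim (\<lambda>n. \<rho> * inverse ((\<epsilon>s n)\<^sup>2)) at_top sequentially"
      using \<rho> by (intro filterlim_tendsto_pos_mult_at_top[OF tendsto_const]) auto
    then have "filterlim (\<lambda>n. \<eta>\<^sup>2 * \<kappa> * (V l / C l) * s0\<^sup>2 / (\<epsilon>s n)\<^sup>2) at_top sequentially"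
      unfolding \<rho>_def by (simp add: field_simps)
    from filterlim_compose[OF Glim[of l] this]
    have "(\<lambda>n. G l (\<eta>\<^sup>2 * \<kappa> * (V l / C l) * s0\<^sup>2 / (\<epsilon>s n)\<^sup>2)) \<longlonglongrightarrow> 0" by (simp add: o_def)
    then have "(\<lambda>n. G l (\<eta>\<^sup>2 * \<kappa> * (V l / C l) * s0\<^sup>2 / (\<epsilon>s n)\<^sup>2) / (\<kappa> * sqrt (V l / C l) * s0)) \<longlonglongrightarrow> 0 / (\<kappa> * sqrt (V l / C l) * s0)"
      by (intro tendsto_divide tendsto_const) (use k s0 True Cpos[of l] in auto)
    then show ?thesis unfolding U_def using True by simp
  qed
  have "(\<lambda>n. \<Sum>l<l0. U n l) \<longlonglongrightarrow> 0"
    using tendsto_sum[of "{..<l0}" "\<lambda>l n. U n l" "\<lambda>_. 0"] Ulim by simp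
  then have small: "\<forall>\<^sub>F n in sequentially. (\<Sum>l<l0. U n l) < \<delta> / 3"
    using d by (intro order_tendstoD(2)) auto
  show "\<forall>\<^sub>F n in sequentially. dist (\<Sum>l\<le>L n. Tm G \<eta> n l) 0 < \<delta>"
    using l0 small k(2)
  proof eventually_elim
    case (elim n)
    have sub: "{l0..L n} \<subseteq> {..L n}" by auto
    have "(\<Sum>l\<le>L n. Tm G \<eta> n l) = (\<Sum>l\<in>{..L n} - {l0..L n}. Tm G \<eta> n l) + (\<Sum>l=l0..L n. Tm G \<eta> n l)"
      by (rule sum.subset_diff[OF sub]) simp
    also have "(\<Sum>l\<in>{..L n} - {l0..L n}. Tm G \<eta> n l) \<le> (\<Sum>l\<in>{..L n} - {l0..L n}. U n l)"
      by (rule sum_mono) (unfold U_def s0_def, rule Tm_small[OF Gnn GV Gmono k(1) elim(3)])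
    also have "\<dots> \<le> (\<Sum>l<l0. U n l)"
      by (rule sum_mono2) (auto intro: U_nn)
    finally have "(\<Sum>l\<le>L n. Tm G \<eta> n l) \<le> \<delta> / 3 + \<delta> / 3" using elim(1,2) by linarith
    moreover have "(\<Sum>l\<le>L n. Tm G \<eta> n l) \<ge> 0" by (intro sum_nonneg Tm_nonneg Gnn)
    ultimately show ?case using d by (simp add: dist_real_def)
  qed
qed


lemma sum_w: "(\<Sum>l\<le>L n. V l / (real (Mn n l) * \<sigma>2 n)) = 1"
proof -
  have "(\<Sum>l\<le>L n. V l / (real (Mn n l) * \<sigma>2 n)) = (\<Sum>l\<le>L n. V l / real (Mn n l)) / \<sigma>2 n"
    by (simp add: sum_divide_distrib)
  then show ?thesis using sigma2_pos[of n] unfolding \<sigma>2_def by simp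
qed

lemma Tm_le_w:
  assumes Gnn: "\<And>l c. G l c \<ge> 0" and GV: "\<And>l c. G l c \<le> V l"
  shows "Tm G \<eta> n l \<le> V l / (real (Mn n l) * \<sigma>2 n)"
  unfolding Tm_def using GV Mn_pos[of n l] sigma2_pos[of n] by (intro divide_right_mono) auto

lemma tail_iii:
  assumes bg: "\<beta> > \<gamma>" and Gnn: "\<And>l c. G l c \<ge> 0" and GV: "\<And>l c. G l c \<le> V l"
    and k: "\<kappa> > 0" "\<forall>\<^sub>F n in sequentially. \<kappa> * (\<epsilon>s n)\<^sup>2 \<le> \<sigma>2 n"
    and d: "\<delta> > 0"
  shows "\<exists>l0. \<forall>\<^sub>F n in sequentially. (\<Sum>l=l0..L n. Tm G \<eta> n l) \<le> \<delta>"
proof -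
  define q where "q = exp (- (\<beta> - \<gamma>) / 2)"
  have q: "0 \<le> q" "q < 1" unfolding q_def using bg by auto
  define s0 where "s0 = sqrt (V 0 * C 0)"
  have s0: "s0 > 0" unfolding s0_def using S0_pos by simp
  define c where "c = sqrt (K * C') / (\<kappa> * s0)"
  have c: "c > 0" unfolding c_def using Kpos C'pos k s0 by simp
  have "(\<lambda>l. c * q ^ l / (1 - q)) \<longlonglongrightarrow> c * 0 / (1 - q)"
    using q by (intro tendsto_intros LIMSEQ_power_zero) auto
  then have "\<forall>\<^sub>F l in sequentially. c * q ^ l / (1 - q) < \<delta>"
    using d by (intro order_tendstoD(2)) auto
  then obtain l0 where l0: "c * q ^ l0 / (1 - q) < \<delta>"
    by (auto simp: eventually_sequentially)
  have "\<forall>\<^sub>F n in sequentially. (\<Sum>l=l0..L n. Tm G \<eta> n l) \<le> \<delta>"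
    using k(2)
  proof eventually_elim
    case (elim n)
    have pt: "Tm G \<eta> n l \<le> c * q ^ l" for l
    proof (cases "V l > 0")
      case False then show ?thesis using Tm_zero[OF Gnn GV False] c q by simp
    next
      case True
      have vc: "sqrt (V l / C l) > 0" using True Cpos[of l] by simp
      have "Tm G \<eta> n l \<le> V l / (real (Mn n l) * \<sigma>2 n)" by (rule Tm_le_w[OF Gnn GV])
      also have "\<dots> \<le> V l / (\<kappa> * sqrt (V l / C l) * s0)"
      proof -
        have "\<kappa> * sqrt (V l / C l) * s0 \<le> \<kappa> * sqrt (V l / C l) * S n"
          using s0 k vc S_ge0[of "L n"] unfolding s0_def S_def by (intro mult_left_mono) auto
        also have "\<dots> \<le> real (Mn n l) * \<sigma>2 n" by (rule Msig_lower[OF k(1) elim])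
        finally show ?thesis using True k vc s0 Mn_pos[of n l] sigma2_pos[of n]
          by (intro divide_left_mono) (auto intro!: mult_pos_pos)
      qed
      also have "\<dots> = sqrt (V l * C l) / (\<kappa> * s0)"
      proof -
        have "V l = sqrt (V l) * sqrt (V l)" using True by simp
        then show ?thesis using True Cpos[of l] k s0
          by (simp add: real_sqrt_divide real_sqrt_mult field_simps)
      qed
      also have "\<dots> \<le> sqrt (K * C') * q ^ l / (\<kappa> * s0)"
        unfolding q_def using k s0 by (intro divide_right_mono sqVC_le) auto
      finally show ?thesis unfolding c_def by simp
    qed
    have "(\<Sum>l=l0..L n. Tm G \<eta> n l) \<le> (\<Sum>l=l0..L n. c * q ^ l)" by (rule sum_mono) (rule pt)
    also have "\<dots> = c * (\<Sum>l=l0..L n. q ^ l)" by (simp add: sum_distrib_left)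
    also have "\<dots> \<le> c * (q ^ l0 / (1 - q))" using geo_tail[OF q] c by (intro mult_left_mono) auto
    finally show ?case using l0 by simp
  qed
  then show ?thesis by blast
qed

lemma tail_i_ii:
  assumes Gnn: "\<And>l c. G l c \<ge> 0" and GV: "\<And>l c. G l c \<le> V l"
    and Gmono: "\<And>l c c'. c \<le> c' \<Longrightarrow> G l c' \<le> G l c"
    and h: "\<And>\<nu>. \<nu> > 0 \<Longrightarrow> (\<lambda>l. if V l > 0 then G l (V l * (\<nu> * (mlmc_S V C l)\<^sup>2 * exp ((2 * \<alpha> - \<gamma>) * real l))) / V l else 0) \<longlonglongrightarrow> 0"
    and k: "\<kappa> > 0" "\<forall>\<^sub>F n in sequentially. \<kappa> * (\<epsilon>s n)\<^sup>2 \<le> \<sigma>2 n"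
    and eta: "\<eta> > 0" and d: "\<delta> > 0"
  shows "\<exists>l0. \<forall>\<^sub>F n in sequentially. (\<Sum>l=l0..L n. Tm G \<eta> n l) \<le> \<delta>"
proof -
  define \<nu> where "\<nu> = \<eta>\<^sup>2 * \<kappa> / (c\<alpha>\<^sup>2 * exp (2 * \<alpha>) * C')"
  have \<nu>: "\<nu> > 0" unfolding \<nu>_def using eta k capos C'pos by simp
  define hh where "hh l = (if V l > 0 then G l (V l * (\<nu> * (mlmc_S V C l)\<^sup>2 * exp ((2 * \<alpha> - \<gamma>) * real l))) / V l else 0)" for l
  have "\<forall>\<^sub>F l in sequentially. hh l < \<delta>"
    using h[OF \<nu>] d unfolding hh_def by (intro order_tendstoD(2)) auto
  then obtain l0 where l0: "\<And>l. l \<ge> l0 \<Longrightarrow> hh l < \<delta>"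
    by (auto simp: eventually_sequentially)
  have "\<forall>\<^sub>F n in sequentially. (\<Sum>l=l0..L n. Tm G \<eta> n l) \<le> \<delta>"
    using k(2) ev_eps_small[OF capos]
  proof eventually_elim
    case (elim n)
    have pt: "Tm G \<eta> n l \<le> \<delta> * (V l / (real (Mn n l) * \<sigma>2 n))" if l: "l \<in> {l0..L n}" for l
    proof (cases "V l > 0")
      case False then show ?thesis using Tm_zero[OF Gnn GV False] Vnn[of l] by simp
    next
      case True
      have e: "\<epsilon>s n > 0" by (rule epos)
      define \<tau> where "\<tau> = \<nu> * (mlmc_S V C l)\<^sup>2 * exp ((2 * \<alpha> - \<gamma>) * real l)"
      have thr: "V l * \<tau> \<le> \<eta>\<^sup>2 * (real (Mn n l))\<^sup>2 * \<sigma>2 n"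
      proof -
        have i1: "exp (2 * \<alpha> * real (L n)) / (c\<alpha>\<^sup>2 * exp (2 * \<alpha>)) \<le> 1 / (\<epsilon>s n)\<^sup>2"
          by (rule inv_eps2[OF elim(2)])
        have i2: "1 / (C' * exp (\<gamma> * real l)) \<le> 1 / C l"
          using Cle[of l] Cpos[of l] by (intro divide_left_mono) auto
        have i3: "(mlmc_S V C l)\<^sup>2 \<le> (S n)\<^sup>2"
        proof -
          have "0 \<le> mlmc_S V C l" using S_ge0[of l] S0_pos by linarith
          then show ?thesis unfolding S_def using l S_mono[of l "L n"] by (intro power_mono) auto
        qed
        have i4: "exp (2 * \<alpha> * real l) \<le> exp (2 * \<alpha> * real (L n))"
          using l apos by simp
        have "V l * \<tau> = \<eta>\<^sup>2 * \<kappa> * V l * (mlmc_S V C l)\<^sup>2 *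
              (exp (2 * \<alpha> * real l) / (c\<alpha>\<^sup>2 * exp (2 * \<alpha>))) * (1 / (C' * exp (\<gamma> * real l)))"
          unfolding \<tau>_def \<nu>_def using capos C'pos
          by (simp add: field_simps left_diff_distrib exp_diff)
        also have "\<dots> \<le> \<eta>\<^sup>2 * \<kappa> * V l * (S n)\<^sup>2 * (1 / (\<epsilon>s n)\<^sup>2) * (1 / C l)"
        proof -
          have "exp (2 * \<alpha> * real l) / (c\<alpha>\<^sup>2 * exp (2 * \<alpha>)) \<le> 1 / (\<epsilon>s n)\<^sup>2"
            using i1 i4 capos by (smt (verit) divide_right_mono exp_gt_zero mult_pos_pos zero_less_power)
          then show ?thesis using i2 i3 True k eta C'pos
            by (intro mult_mono mult_left_mono) auto
        qed
        also have "\<dots> = \<eta>\<^sup>2 * \<kappa> * (V l / C l) * (S n)\<^sup>2 / (\<epsilon>s n)\<^sup>2" by simp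
        also have "\<dots> \<le> \<eta>\<^sup>2 * (real (Mn n l))\<^sup>2 * \<sigma>2 n" by (rule thr_lower[OF k(1) elim(1)])
        finally show ?thesis .
      qed
      have "Tm G \<eta> n l \<le> G l (V l * \<tau>) / (real (Mn n l) * \<sigma>2 n)"
        unfolding Tm_def using Gmono[OF thr] Mn_pos[of n l] sigma2_pos[of n]
        by (intro divide_right_mono) auto
      also have "\<dots> = (V l / (real (Mn n l) * \<sigma>2 n)) * hh l"
        unfolding hh_def \<tau>_def using True by simp
      also have "\<dots> \<le> (V l / (real (Mn n l) * \<sigma>2 n)) * \<delta>"
        using l0[of l] l True Mn_pos[of n l] sigma2_pos[of n] by (intro mult_left_mono) auto
      finally show ?thesis by (simp add: mult.commute)
    qed
    have "(\<Sum>l=l0..L n. Tm G \<eta> n l) \<le> (\<Sum>l=l0..L n. \<delta> * (V l / (real (Mn n l) * \<sigma>2 n)))"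
      by (rule sum_mono) (rule pt)
    also have "\<dots> = \<delta> * (\<Sum>l=l0..L n. V l / (real (Mn n l) * \<sigma>2 n))" by (simp add: sum_distrib_left)
    also have "\<dots> \<le> \<delta> * (\<Sum>l\<le>L n. V l / (real (Mn n l) * \<sigma>2 n))"
      using d Vnn Mn_pos sigma2_pos
      by (intro mult_left_mono sum_mono2) (auto intro!: divide_nonneg_pos)
    also have "\<dots> = \<delta>" using sum_w[of n] by simp
    finally show ?case .
  qed
  then show ?thesis by blast
qed


lemma S_pos: "mlmc_S V C k > 0" using S_ge0[of k] S0_pos by linarith

lemma R_case_i:
  assumes g: "\<gamma> \<le> 2 * \<alpha>" and S: "filterlim (mlmc_S V C) at_top sequentially"
  shows "(\<lambda>k. exp ((\<gamma> - 2 * \<alpha>) * real k) / (mlmc_S V C k)\<^sup>2) \<longlonglongrightarrow> 0"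
proof (rule Lim_null_comparison)
  have "filterlim (\<lambda>k. (mlmc_S V C k)\<^sup>2) at_top sequentially"
    by (rule filterlim_pow_at_top) (use S in auto)
  then show "(\<lambda>k. inverse ((mlmc_S V C k)\<^sup>2)) \<longlonglongrightarrow> 0"
    by (rule tendsto_inverse_0_at_top)
  show "\<forall>\<^sub>F k in sequentially. norm (exp ((\<gamma> - 2 * \<alpha>) * real k) / (mlmc_S V C k)\<^sup>2) \<le> inverse ((mlmc_S V C k)\<^sup>2)"
  proof (intro always_eventually allI)
    fix k
    have "exp ((\<gamma> - 2 * \<alpha>) * real k) \<le> 1" using g by (simp add: mult_nonpos_nonneg)
    then show "norm (exp ((\<gamma> - 2 * \<alpha>) * real k) / (mlmc_S V C k)\<^sup>2) \<le> inverse ((mlmc_S V C k)\<^sup>2)"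
      using S_pos[of k] by (simp add: divide_inverse)
  qed
qed

lemma R_case_ii:
  assumes u: "\<upsilon> < 2 * \<alpha>" and li: "liminf (\<lambda>k. ereal (mlmc_S V C k * exp ((\<upsilon> - \<gamma>) * real k / 2))) > 1"
  shows "(\<lambda>k. exp ((\<gamma> - 2 * \<alpha>) * real k) / (mlmc_S V C k)\<^sup>2) \<longlonglongrightarrow> 0"
proof (rule Lim_null_comparison)
  have "(\<lambda>k. exp (\<upsilon> - 2 * \<alpha>) ^ k) \<longlonglongrightarrow> 0"
    using u by (intro LIMSEQ_power_zero) auto
  then show "(\<lambda>k. exp ((\<upsilon> - 2 * \<alpha>) * real k)) \<longlonglongrightarrow> 0"
    by (simp add: exp_of_nat_mult[symmetric] mult.commute)
  have "\<forall>\<^sub>F k in sequentially. 1 < ereal (mlmc_S V C k * exp ((\<upsilon> - \<gamma>) * real k / 2))"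
    using less_LiminfD[OF li] by simp
  then show "\<forall>\<^sub>F k in sequentially. norm (exp ((\<gamma> - 2 * \<alpha>) * real k) / (mlmc_S V C k)\<^sup>2) \<le> exp ((\<upsilon> - 2 * \<alpha>) * real k)"
  proof eventually_elim
    case (elim k)
    define x where "x = mlmc_S V C k * exp ((\<upsilon> - \<gamma>) * real k / 2)"
    have x1: "1 < x" using elim unfolding x_def by simp
    have sp: "mlmc_S V C k > 0" by (rule S_pos)
    have "x\<^sup>2 = (mlmc_S V C k)\<^sup>2 * exp ((\<upsilon> - \<gamma>) * real k)"
      unfolding x_def by (simp add: power2_eq_square field_simps flip: exp_add)
    moreover have "1 \<le> x\<^sup>2" using x1 by (simp add: one_le_power)
    ultimately have "1 \<le> (mlmc_S V C k)\<^sup>2 * exp ((\<upsilon> - \<gamma>) * real k)" by simp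
    then have "exp ((\<gamma> - 2 * \<alpha>) * real k) \<le> exp ((\<gamma> - 2 * \<alpha>) * real k) * ((mlmc_S V C k)\<^sup>2 * exp ((\<upsilon> - \<gamma>) * real k))"
      by simp
    also have "\<dots> = (mlmc_S V C k)\<^sup>2 * exp ((\<upsilon> - 2 * \<alpha>) * real k)"
      by (simp add: algebra_simps flip: exp_add)
    finally have "exp ((\<gamma> - 2 * \<alpha>) * real k) / (mlmc_S V C k)\<^sup>2 \<le> exp ((\<upsilon> - 2 * \<alpha>) * real k)"
      using sp by (simp add: divide_le_eq mult.commute)
    then show ?case by simp
  qed
qed

theorem lind_analysis:
  assumes Gnn: "\<And>l c. G l c \<ge> 0" and GV: "\<And>l c. G l c \<le> V l"
    and Gmono: "\<And>l c c'. c \<le> c' \<Longrightarrow> G l c' \<le> G l c"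
    and Glim: "\<And>l. (G l \<longlongrightarrow> 0) at_top"
    and eta: "\<eta> > 0"
    and ci: "\<beta> = \<gamma> \<Longrightarrow> filterlim (mlmc_S V C) at_top sequentially \<and>
        (\<forall>\<nu>>0. (\<lambda>l. if V l > 0 then G l (V l * (\<nu> * (mlmc_S V C l)\<^sup>2 * exp ((2 * \<alpha> - \<gamma>) * real l))) / V l else 0) \<longlonglongrightarrow> 0)"
    and cii: "\<gamma> > \<beta> \<Longrightarrow> \<beta> < 2 * \<alpha> \<and>
        (\<forall>\<nu>>0. (\<lambda>l. if V l > 0 then G l (V l * (\<nu> * (mlmc_S V C l)\<^sup>2 * exp ((2 * \<alpha> - \<gamma>) * real l))) / V l else 0) \<longlonglongrightarrow> 0) \<and>
        (\<exists>\<upsilon>. \<beta> \<le> \<upsilon> \<and> \<upsilon> < 2 * \<alpha> \<and> liminf (\<lambda>k. ereal (mlmc_S V C k * exp ((\<upsilon> - \<gamma>) * real k / 2))) > 1)"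
  shows "(\<lambda>n. \<Sum>l\<le>L n. Tm G \<eta> n l) \<longlonglongrightarrow> 0"
proof -
  consider "\<beta> > \<gamma>" | "\<beta> = \<gamma>" | "\<gamma> > \<beta>" by linarith
  then show ?thesis
  proof cases
    case 1
    obtain \<kappa> where k: "\<kappa> > 0" "\<forall>\<^sub>F n in sequentially. \<kappa> * (\<epsilon>s n)\<^sup>2 \<le> \<sigma>2 n"
      using sigma2_lower_iii[OF 1] by blast
    show ?thesis
      using lind_combine[OF Gnn GV Gmono Glim k eta tail_iii[OF 1 Gnn GV k]] by simp
  next
    case 2
    have g: "\<gamma> \<le> 2 * \<alpha>" using minle 2 by simp
    obtain \<kappa> where k: "\<kappa> > 0" "\<forall>\<^sub>F n in sequentially. \<kappa> * (\<epsilon>s n)\<^sup>2 \<le> \<sigma>2 n"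
      using sigma2_lower_i_ii[OF R_case_i[OF g]] ci[OF 2] by blast
    show ?thesis
    proof (rule lind_combine[where G=G and \<eta>=\<eta>, OF Gnn GV Gmono Glim k eta])
      fix \<delta> :: real assume d: "\<delta> > 0"
      have h: "\<And>\<nu>. \<nu> > 0 \<Longrightarrow> (\<lambda>l. if V l > 0 then G l (V l * (\<nu> * (mlmc_S V C l)\<^sup>2 * exp ((2 * \<alpha> - \<gamma>) * real l))) / V l else 0) \<longlonglongrightarrow> 0"
        using ci[OF 2] by blast
      show "\<exists>l0. \<forall>\<^sub>F n in sequentially. (\<Sum>l=l0..L n. Tm G \<eta> n l) \<le> \<delta>"
        by (rule tail_i_ii[where G=G and \<eta>=\<eta>, OF Gnn GV Gmono h k eta d])
    qed
  next
    case 3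
    obtain \<upsilon> where u: "\<upsilon> < 2 * \<alpha>" "liminf (\<lambda>k. ereal (mlmc_S V C k * exp ((\<upsilon> - \<gamma>) * real k / 2))) > 1"
      using cii[OF 3] by blast
    obtain \<kappa> where k: "\<kappa> > 0" "\<forall>\<^sub>F n in sequentially. \<kappa> * (\<epsilon>s n)\<^sup>2 \<le> \<sigma>2 n"
      using sigma2_lower_i_ii[OF R_case_ii[OF u]] by blast
    show ?thesis
    proof (rule lind_combine[where G=G and \<eta>=\<eta>, OF Gnn GV Gmono Glim k eta])
      fix \<delta> :: real assume d: "\<delta> > 0"
      have h: "\<And>\<nu>. \<nu> > 0 \<Longrightarrow> (\<lambda>l. if V l > 0 then G l (V l * (\<nu> * (mlmc_S V C l)\<^sup>2 * exp ((2 * \<alpha> - \<gamma>) * real l))) / V l else 0) \<longlonglongrightarrow> 0"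
        using cii[OF 3] by blast
      show "\<exists>l0. \<forall>\<^sub>F n in sequentially. (\<Sum>l=l0..L n. Tm G \<eta> n l) \<le> \<delta>"
        by (rule tail_i_ii[where G=G and \<eta>=\<eta>, OF Gnn GV Gmono h k eta d])
    qed
  qed
qed

end


theorem theorem1:
  fixes M :: "'a measure"
    and X :: "'a \<Rightarrow> real"
    and Xs :: "nat \<Rightarrow> 'a \<Rightarrow> real"
    and D :: "nat \<Rightarrow> nat \<Rightarrow> 'a \<Rightarrow> real"
    and V C :: "nat \<Rightarrow> real"
    and \<alpha> \<beta> \<gamma> c\<alpha> :: real
  assumes P: "prob_space M"
    and X_L2: "X \<in> borel_measurable M" "integrable M (\<lambda>\<omega>. (X \<omega>)\<^sup>2)"
    and Xs_L2: "\<And>l. Xs l \<in> borel_measurable M" "\<And>l. integrable M (\<lambda>\<omega>. (Xs l \<omega>)\<^sup>2)"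
    and V_def: "V = (\<lambda>l. \<integral>\<omega>. (dX Xs l \<omega> - (\<integral>\<omega>'. dX Xs l \<omega>' \<partial>M))\<^sup>2 \<partial>M)"
    and D_meas: "\<And>l i. D l i \<in> borel_measurable M"
    and D_indep: "prob_space.indep_vars M (\<lambda>_. borel) (\<lambda>p. D (fst p) (snd p)) (UNIV \<times> {1..})"
    and D_law: "\<And>l i. i \<ge> 1 \<Longrightarrow> distr M borel (D l i) = distr M borel (dX Xs l)"
    and pos: "\<alpha> > 0" "\<beta> > 0" "\<gamma> > 0" "c\<alpha> > 0"
    and minle: "min \<beta> \<gamma> \<le> 2 * \<alpha>"
    and bias: "\<And>l. \<bar>(\<integral>\<omega>. X \<omega> - Xs l \<omega> \<partial>M)\<bar> \<le> c\<alpha> * exp (- \<alpha> * real l)"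
    and var: "\<exists>K>0. \<forall>l. V l \<le> K * exp (- \<beta> * real l)"
    and cost: "\<exists>c C'. 0 < c \<and> c < C' \<and>
                 (\<forall>l. c * exp (\<gamma> * real l) < C l \<and> C l < C' * exp (\<gamma> * real l))"
    and V0: "V 0 > 0"
    and case_i: "\<beta> = \<gamma> \<Longrightarrow> filterlim (mlmc_S V C) at_top sequentially \<and>
                   lindeberg_cond M Xs V C \<alpha> \<gamma>"
    and case_ii: "\<gamma> > \<beta> \<Longrightarrow> \<beta> < 2 * \<alpha> \<and> lindeberg_cond M Xs V C \<alpha> \<gamma> \<and>
                   (\<exists>\<upsilon>. \<beta> \<le> \<upsilon> \<and> \<upsilon> < 2 * \<alpha> \<and>
                      liminf (\<lambda>k. ereal (mlmc_S V C k * exp ((\<upsilon> - \<gamma>) * real k / 2))) > 1)"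
  shows "\<forall>\<epsilon>s :: nat \<Rightarrow> real. (\<forall>n. \<epsilon>s n > 0) \<longrightarrow> \<epsilon>s \<longlonglongrightarrow> 0 \<longrightarrow>
     weak_conv_m
       (\<lambda>n. distr M borel (\<lambda>\<omega>.
          (mlmc_A V C c\<alpha> \<alpha> D (\<epsilon>s n) \<omega> - (\<integral>\<omega>'. Xs (mlmc_L c\<alpha> \<alpha> (\<epsilon>s n)) \<omega>' \<partial>M)) /
          sqrt (\<integral>\<omega>'. (mlmc_A V C c\<alpha> \<alpha> D (\<epsilon>s n) \<omega>' -
                     (\<integral>\<omega>''. mlmc_A V C c\<alpha> \<alpha> D (\<epsilon>s n) \<omega>'' \<partial>M))\<^sup>2 \<partial>M)))
       std_normal_distribution"
proof (intro allI impI)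
  fix \<epsilon>s :: "nat \<Rightarrow> real"
  assume epos: "\<forall>n. \<epsilon>s n > 0" and elim: "\<epsilon>s \<longlonglongrightarrow> 0"
  interpret prob_space M by (rule P)
  obtain K where K: "K > 0" "\<And>l. V l \<le> K * exp (- \<beta> * real l)" using var by blast
  obtain c0 C'' where cc: "0 < c0" "c0 < C''" "\<And>l. c0 * exp (\<gamma> * real l) < C l \<and> C l < C'' * exp (\<gamma> * real l)"
    using cost by blast
  have Vnn: "V l \<ge> 0" for l unfolding V_def by (rule integral_nonneg_AE) auto
  interpret A: mlmc_an V C \<alpha> \<beta> \<gamma> c\<alpha> K c0 C'' \<epsilon>s
    by unfold_locales (use pos minle Vnn K cc V0 epos elim in auto)
  note Xm[measurable] = Xs_L2(1)
  note Dm[measurable] = D_meas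
  have dXm[measurable]: "dX Xs l \<in> borel_measurable M" for l
    by (cases "l = 0") (auto simp: dX_def[abs_def])
  have Xint: "integrable M (Xs l)" for l
    by (rule square_integrable_imp_integrable[OF Xs_L2(1) Xs_L2(2)])
  have dXsq: "integrable M (\<lambda>x. (dX Xs l x)\<^sup>2)" for l
  proof (rule Bochner_Integration.integrable_bound[where f="\<lambda>x. 2 * (Xs l x)\<^sup>2 + 2 * (if l = 0 then 0 else Xs (l - 1) x)\<^sup>2"])
    show "integrable M (\<lambda>x. 2 * (Xs l x)\<^sup>2 + 2 * (if l = 0 then 0 else Xs (l - 1) x)\<^sup>2)"
      using Xs_L2(2) by (cases "l = 0") auto
    show "AE x in M. norm ((dX Xs l x)\<^sup>2) \<le> norm (2 * (Xs l x)\<^sup>2 + 2 * (if l = 0 then 0 else Xs (l - 1) x)\<^sup>2)"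
    proof (rule AE_I2)
      fix x
      have "(a - b)\<^sup>2 \<le> 2 * a\<^sup>2 + 2 * b\<^sup>2" for a b :: real
        using zero_le_power2[of "a + b"] unfolding power2_diff power2_sum by linarith
      then show "norm ((dX Xs l x)\<^sup>2) \<le> norm (2 * (Xs l x)\<^sup>2 + 2 * (if l = 0 then 0 else Xs (l - 1) x)\<^sup>2)"
        unfolding dX_def by simp
    qed
  qed auto
  have dXint: "integrable M (dX Xs l)" for l
    by (rule square_integrable_imp_integrable[OF dXm dXsq])
  define m where "m l = expectation (dX Xs l)" for l
  define W where "W l x = dX Xs l x - m l" for l x
  have Wm[measurable]: "W l \<in> borel_measurable M" for l unfolding W_def[abs_def] by auto
  have Wsq: "integrable M (\<lambda>x. (W l x)\<^sup>2)" for l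
    unfolding W_def power2_diff using dXsq dXint by auto
  have VW: "V l = expectation (\<lambda>x. (W l x)\<^sup>2)" for l unfolding V_def W_def m_def ..
  define G where "G l c = expectation (\<lambda>x. (W l x)\<^sup>2 * indicator {x. c < (W l x)\<^sup>2} x)" for l c
  have Gnn: "G l c \<ge> 0" for l c unfolding G_def by (rule tail_sq_nonneg)
  have GV: "G l c \<le> V l" for l c unfolding G_def VW by (rule tail_sq_le[OF Wm Wsq])
  have Gmono: "c \<le> c' \<Longrightarrow> G l c' \<le> G l c" for l c c' unfolding G_def by (rule tail_sq_antimono[OF Wm Wsq])
  have Glim: "(G l \<longlongrightarrow> 0) at_top" for l unfolding G_def[abs_def] by (rule tail_sq_tendsto[OF Wm Wsq])
  have lawD: "distr M borel (D l i) = distr M borel (dX Xs l)" if "i \<ge> 1" for l i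
    using D_law that .
  have D_int: "integrable M (D l i)" "expectation (D l i) = m l" if i: "i \<ge> 1" for l i
    using law_transfer[of "D l i" "dX Xs l" "\<lambda>v. v", OF Dm dXm _ lawD[OF i]] dXint
    unfolding m_def by auto
  have D_sq: "integrable M (\<lambda>x. (D l i x - m l)\<^sup>2)" "expectation (\<lambda>x. (D l i x - m l)\<^sup>2) = V l"
    if i: "i \<ge> 1" for l i
    using law_transfer[of "D l i" "dX Xs l" "\<lambda>v. (v - m l)\<^sup>2", OF Dm dXm _ lawD[OF i]] Wsq[of l]
    unfolding VW W_def by auto
  have D_tail: "integrable M (\<lambda>x. (D l i x - m l)\<^sup>2 * indicator {x. c < (D l i x - m l)\<^sup>2} x)"
     "expectation (\<lambda>x. (D l i x - m l)\<^sup>2 * indicator {x. c < (D l i x - m l)\<^sup>2} x) = G l c"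
    if i: "i \<ge> 1" for l i c
  proof -
    have g: "(\<lambda>v. (v - m l)\<^sup>2 * indicator {v. c < (v - m l)\<^sup>2} v) \<in> borel_measurable borel" by measurable
    note lt = law_transfer[of "D l i" "dX Xs l" "\<lambda>v. (v - m l)\<^sup>2 * indicator {v. c < (v - m l)\<^sup>2} v", OF Dm dXm g lawD[OF i]]
    have e1: "(\<lambda>x. (D l i x - m l)\<^sup>2 * indicator {v. c < (v - m l)\<^sup>2} (D l i x)) = (\<lambda>x. (D l i x - m l)\<^sup>2 * indicator {x. c < (D l i x - m l)\<^sup>2} x)"
      by (auto simp: indicator_def)
    have e2: "(\<lambda>x. (dX Xs l x - m l)\<^sup>2 * indicator {v. c < (v - m l)\<^sup>2} (dX Xs l x)) = (\<lambda>x. (W l x)\<^sup>2 * indicator {x. c < (W l x)\<^sup>2} x)"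
      by (auto simp: indicator_def W_def)
    show "integrable M (\<lambda>x. (D l i x - m l)\<^sup>2 * indicator {x. c < (D l i x - m l)\<^sup>2} x)"
      using lt(2) tail_sq_integrable[OF Wm Wsq, of l c] unfolding e1 e2 by simp
    show "expectation (\<lambda>x. (D l i x - m l)\<^sup>2 * indicator {x. c < (D l i x - m l)\<^sup>2} x) = G l c"
      using lt(1) unfolding e1 e2 G_def by simp
  qed
  have hyp: "(\<lambda>l. if V l > 0 then G l (V l * (\<nu> * (mlmc_S V C l)\<^sup>2 * exp ((2 * \<alpha> - \<gamma>) * real l))) / V l else 0) \<longlonglongrightarrow> 0"
    if lc: "lindeberg_cond M Xs V C \<alpha> \<gamma>" and nu: "\<nu> > 0" for \<nu>
  proof -
    have "(\<lambda>l. if V l > 0 then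
         (\<integral>\<omega>. ((dX Xs l \<omega> - (\<integral>\<omega>'. dX Xs l \<omega>' \<partial>M))\<^sup>2 / V l) *
            indicator {\<omega>. (dX Xs l \<omega> - (\<integral>\<omega>'. dX Xs l \<omega>' \<partial>M))\<^sup>2 / V l
                 > \<nu> * (mlmc_S V C l)\<^sup>2 * exp ((2 * \<alpha> - \<gamma>) * real l)} \<omega> \<partial>M)
       else 0) \<longlonglongrightarrow> 0"
      using lc nu unfolding lindeberg_cond_def by blast
    moreover have "(\<lambda>l. if V l > 0 then
         (\<integral>\<omega>. ((dX Xs l \<omega> - (\<integral>\<omega>'. dX Xs l \<omega>' \<partial>M))\<^sup>2 / V l) *
            indicator {\<omega>. (dX Xs l \<omega> - (\<integral>\<omega>'. dX Xs l \<omega>' \<partial>M))\<^sup>2 / V l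
                 > \<nu> * (mlmc_S V C l)\<^sup>2 * exp ((2 * \<alpha> - \<gamma>) * real l)} \<omega> \<partial>M)
       else 0) = (\<lambda>l. if V l > 0 then G l (V l * (\<nu> * (mlmc_S V C l)\<^sup>2 * exp ((2 * \<alpha> - \<gamma>) * real l))) / V l else 0)"
    proof (rule ext)
      fix l
      show "(if V l > 0 then
         (\<integral>\<omega>. ((dX Xs l \<omega> - (\<integral>\<omega>'. dX Xs l \<omega>' \<partial>M))\<^sup>2 / V l) *
            indicator {\<omega>. (dX Xs l \<omega> - (\<integral>\<omega>'. dX Xs l \<omega>' \<partial>M))\<^sup>2 / V l
                 > \<nu> * (mlmc_S V C l)\<^sup>2 * exp ((2 * \<alpha> - \<gamma>) * real l)} \<omega> \<partial>M)
         else 0) = (if V l > 0 then G l (V l * (\<nu> * (mlmc_S V C l)\<^sup>2 * exp ((2 * \<alpha> - \<gamma>) * real l))) / V l else 0)"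
      proof (cases "V l > 0")
        case True
        define \<tau> where "\<tau> = \<nu> * (mlmc_S V C l)\<^sup>2 * exp ((2 * \<alpha> - \<gamma>) * real l)"
        have "(\<lambda>\<omega>. ((dX Xs l \<omega> - (\<integral>\<omega>'. dX Xs l \<omega>' \<partial>M))\<^sup>2 / V l) *
            indicator {\<omega>. (dX Xs l \<omega> - (\<integral>\<omega>'. dX Xs l \<omega>' \<partial>M))\<^sup>2 / V l > \<tau>} \<omega>)
          = (\<lambda>\<omega>. (W l \<omega>)\<^sup>2 * indicator {x. V l * \<tau> < (W l x)\<^sup>2} \<omega> / V l)"
          using True by (auto simp: W_def m_def indicator_def field_simps)
        then show ?thesis using True unfolding \<tau>_def[symmetric] G_def by simp
      qed simp
    qed
    ultimately show ?thesis by simp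
  qed
  show "weak_conv_m
       (\<lambda>n. distr M borel (\<lambda>\<omega>.
          (mlmc_A V C c\<alpha> \<alpha> D (\<epsilon>s n) \<omega> - (\<integral>\<omega>'. Xs (mlmc_L c\<alpha> \<alpha> (\<epsilon>s n)) \<omega>' \<partial>M)) /
          sqrt (\<integral>\<omega>'. (mlmc_A V C c\<alpha> \<alpha> D (\<epsilon>s n) \<omega>' -
                     (\<integral>\<omega>''. mlmc_A V C c\<alpha> \<alpha> D (\<epsilon>s n) \<omega>'' \<partial>M))\<^sup>2 \<partial>M)))
       std_normal_distribution"
  proof -
    define I where "I n = Sigma {..A.L n} (\<lambda>l. {1..A.Mn n l})" for n
    define Z where "Z n p x = (D (fst p) (snd p) x - m (fst p)) / real (A.Mn n (fst p))" for n p x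
    define Y where "Y n p x = (D (fst p) (snd p) x - m (fst p)) / (real (A.Mn n (fst p)) * sqrt (A.\<sigma>2 n))" for n p x
    have I_fin: "finite (I n)" for n unfolding I_def by auto
    have I_sub: "I n \<subseteq> UNIV \<times> {1..}" for n unfolding I_def by auto
    have I_snd: "p \<in> I n \<Longrightarrow> snd p \<ge> 1" for n p unfolding I_def by auto
    have sig: "A.\<sigma>2 n > 0" for n by (rule A.sigma2_pos)
    have Mp: "real (A.Mn n l) > 0" for n l by (rule A.Mn_pos)
    have Zind: "indep_vars (\<lambda>_. borel) (Z n) (I n)" for n
    proof -
      have "indep_vars (\<lambda>_. borel) (\<lambda>p x. (\<lambda>v. (v - m (fst p)) / real (A.Mn n (fst p))) (D (fst p) (snd p) x)) (I n)"
        by (rule indep_vars_compose2[OF indep_vars_subset[OF D_indep I_sub]]) auto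
      then show ?thesis unfolding Z_def[abs_def] by simp
    qed
    have Yind: "indep_vars (\<lambda>_. borel) (Y n) (I n)" for n
    proof -
      have "indep_vars (\<lambda>_. borel) (\<lambda>p x. (\<lambda>v. (v - m (fst p)) / (real (A.Mn n (fst p)) * sqrt (A.\<sigma>2 n))) (D (fst p) (snd p) x)) (I n)"
        by (rule indep_vars_compose2[OF indep_vars_subset[OF D_indep I_sub]]) auto
      then show ?thesis unfolding Y_def[abs_def] by simp
    qed
    have Zsq: "integrable M (\<lambda>x. (Z n p x)\<^sup>2)" "expectation (\<lambda>x. (Z n p x)\<^sup>2) = V (fst p) / (real (A.Mn n (fst p)))\<^sup>2"
      if p: "p \<in> I n" for n p
    proof -
      have e: "(\<lambda>x. (Z n p x)\<^sup>2) = (\<lambda>x. (D (fst p) (snd p) x - m (fst p))\<^sup>2 / (real (A.Mn n (fst p)))\<^sup>2)"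
        unfolding Z_def by (simp add: power_divide)
      show "integrable M (\<lambda>x. (Z n p x)\<^sup>2)" unfolding e using D_sq(1)[OF I_snd[OF p]] by simp
      show "expectation (\<lambda>x. (Z n p x)\<^sup>2) = V (fst p) / (real (A.Mn n (fst p)))\<^sup>2"
        unfolding e using D_sq(2)[OF I_snd[OF p]] by simp
    qed
    have Zmean: "expectation (Z n p) = 0" "integrable M (Z n p)" if p: "p \<in> I n" for n p
      unfolding Z_def using D_int[OF I_snd[OF p]] by (auto simp: prob_space)
    have sumV: "(\<Sum>p\<in>I n. V (fst p) / (real (A.Mn n (fst p)))\<^sup>2) = A.\<sigma>2 n" for n
    proof -
      have "(\<Sum>p\<in>I n. V (fst p) / (real (A.Mn n (fst p)))\<^sup>2) = (\<Sum>l\<le>A.L n. \<Sum>i\<in>{1..A.Mn n l}. V l / (real (A.Mn n l))\<^sup>2)"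
        unfolding I_def by (subst sum.Sigma) (auto simp: case_prod_beta)
      also have "\<dots> = (\<Sum>l\<le>A.L n. V l / real (A.Mn n l))"
        using Mp by (intro sum.cong) (auto simp: power2_eq_square)
      finally show ?thesis unfolding A.\<sigma>2_def .
    qed
    have tele: "(\<Sum>l\<le>k. m l) = expectation (Xs k)" for k
    proof (induction k)
      case 0
      have "dX Xs 0 = Xs 0" by (rule ext) (simp add: dX_def)
      then show ?case by (simp add: m_def)
    next
      case (Suc k)
      have "dX Xs (Suc k) = (\<lambda>x. Xs (Suc k) x - Xs k x)" by (rule ext) (simp add: dX_def)
      then have "m (Suc k) = expectation (Xs (Suc k)) - expectation (Xs k)"
        unfolding m_def using Xint by simp
      then show ?case using Suc by simp
    qed
    have Aeq: "mlmc_A V C c\<alpha> \<alpha> D (\<epsilon>s n) x = (\<Sum>p\<in>I n. Z n p x) + expectation (Xs (A.L n))" for n x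
    proof -
      have "(\<Sum>p\<in>I n. Z n p x) = (\<Sum>l\<le>A.L n. \<Sum>i\<in>{1..A.Mn n l}. (D l i x - m l) / real (A.Mn n l))"
        unfolding I_def Z_def by (subst sum.Sigma) (auto simp: case_prod_beta)
      also have "\<dots> = (\<Sum>l\<le>A.L n. (1 / real (A.Mn n l)) * (\<Sum>i=1..A.Mn n l. D l i x) - m l)"
      proof (rule sum.cong)
        fix l
        have "(\<Sum>i\<in>{1..A.Mn n l}. (D l i x - m l) / real (A.Mn n l))
           = (\<Sum>i=1..A.Mn n l. D l i x) / real (A.Mn n l) - (\<Sum>i=1..A.Mn n l. m l) / real (A.Mn n l)"
          by (simp only: sum_subtractf diff_divide_distrib sum_divide_distrib)
        moreover have "(\<Sum>i=1..A.Mn n l. m l) / real (A.Mn n l) = m l" using Mp[of n l] by simp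
        ultimately show "(\<Sum>i\<in>{1..A.Mn n l}. (D l i x - m l) / real (A.Mn n l)) = (1 / real (A.Mn n l)) * (\<Sum>i=1..A.Mn n l. D l i x) - m l"
          by simp
      qed simp
      also have "\<dots> = mlmc_A V C c\<alpha> \<alpha> D (\<epsilon>s n) x - expectation (Xs (A.L n))"
        unfolding mlmc_A_def A.Mn_def A.L_def tele[symmetric] sum_subtractf ..
      finally show ?thesis by simp
    qed
    have EA: "expectation (mlmc_A V C c\<alpha> \<alpha> D (\<epsilon>s n)) = expectation (Xs (A.L n))" for n
    proof -
      have "expectation (mlmc_A V C c\<alpha> \<alpha> D (\<epsilon>s n)) = expectation (\<lambda>x. (\<Sum>p\<in>I n. Z n p x) + expectation (Xs (A.L n)))"
        unfolding Aeq ..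
      also have "\<dots> = (\<Sum>p\<in>I n. expectation (Z n p)) + expectation (Xs (A.L n))"
        using Zmean by (simp add: Bochner_Integration.integral_sum prob_space)
      finally show ?thesis using Zmean by simp
    qed
    have VarA: "expectation (\<lambda>x. (mlmc_A V C c\<alpha> \<alpha> D (\<epsilon>s n) x - expectation (mlmc_A V C c\<alpha> \<alpha> D (\<epsilon>s n)))\<^sup>2) = A.\<sigma>2 n" for n
    proof -
      have "expectation (\<lambda>x. (mlmc_A V C c\<alpha> \<alpha> D (\<epsilon>s n) x - expectation (mlmc_A V C c\<alpha> \<alpha> D (\<epsilon>s n)))\<^sup>2)
          = expectation (\<lambda>x. (\<Sum>p\<in>I n. Z n p x)\<^sup>2)"
        unfolding EA Aeq by simp
      also have "\<dots> = (\<Sum>p\<in>I n. expectation (\<lambda>x. (Z n p x)\<^sup>2))"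
        by (rule indep_sum_sq[OF I_fin Zind Zsq(1) Zmean(1)])
      also have "\<dots> = A.\<sigma>2 n" using Zsq(2) sumV by simp
      finally show ?thesis .
    qed
    have feq: "(\<lambda>\<omega>. (mlmc_A V C c\<alpha> \<alpha> D (\<epsilon>s n) \<omega> - (\<integral>\<omega>'. Xs (mlmc_L c\<alpha> \<alpha> (\<epsilon>s n)) \<omega>' \<partial>M)) /
          sqrt (\<integral>\<omega>'. (mlmc_A V C c\<alpha> \<alpha> D (\<epsilon>s n) \<omega>' -
                     (\<integral>\<omega>''. mlmc_A V C c\<alpha> \<alpha> D (\<epsilon>s n) \<omega>'' \<partial>M))\<^sup>2 \<partial>M)) = (\<lambda>x. \<Sum>p\<in>I n. Y n p x)" for n
    proof
      fix \<omega>
      have "mlmc_L c\<alpha> \<alpha> (\<epsilon>s n) = A.L n" unfolding A.L_def ..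
      then show "(mlmc_A V C c\<alpha> \<alpha> D (\<epsilon>s n) \<omega> - (\<integral>\<omega>'. Xs (mlmc_L c\<alpha> \<alpha> (\<epsilon>s n)) \<omega>' \<partial>M)) /
          sqrt (\<integral>\<omega>'. (mlmc_A V C c\<alpha> \<alpha> D (\<epsilon>s n) \<omega>' -
                     (\<integral>\<omega>''. mlmc_A V C c\<alpha> \<alpha> D (\<epsilon>s n) \<omega>'' \<partial>M))\<^sup>2 \<partial>M) = (\<Sum>p\<in>I n. Y n p \<omega>)"
        unfolding VarA Aeq[of n \<omega>] Y_def Z_def using sig[of n]
        by (simp add: sum_divide_distrib)
    qed
    have YZ: "Y n p x = Z n p x / sqrt (A.\<sigma>2 n)" for n p x
      unfolding Y_def Z_def by simp
    have Y2: "(Y n p x)\<^sup>2 = (Z n p x)\<^sup>2 / A.\<sigma>2 n" for n p x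
      unfolding YZ using sig[of n] by (simp add: power_divide)
    have Ysq: "integrable M (\<lambda>x. (Y n p x)\<^sup>2)" if "p \<in> I n" for n p
      unfolding Y2 using Zsq(1)[OF that] by simp
    have Ymean: "expectation (Y n p) = 0" if "p \<in> I n" for n p
      unfolding YZ using Zmean[OF that] by simp
    have Yvar: "(\<Sum>p\<in>I n. expectation (\<lambda>x. (Y n p x)\<^sup>2)) = 1" for n
    proof -
      have "(\<Sum>p\<in>I n. expectation (\<lambda>x. (Y n p x)\<^sup>2)) = (\<Sum>p\<in>I n. V (fst p) / (real (A.Mn n (fst p)))\<^sup>2) / A.\<sigma>2 n"
        unfolding Y2 sum_divide_distrib using Zsq(2) by (intro sum.cong) auto
      then show ?thesis using sumV[of n] sig[of n] by simp
    qed
    have sq_less: "\<eta> < \<bar>y\<bar> \<longleftrightarrow> \<eta>\<^sup>2 < y\<^sup>2" if "0 \<le> \<eta>" for \<eta> y :: real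
    proof
      assume "\<eta> < \<bar>y\<bar>"
      then have "\<eta>\<^sup>2 < \<bar>y\<bar>\<^sup>2" using that by (intro power_strict_mono) auto
      then show "\<eta>\<^sup>2 < y\<^sup>2" by simp
    next
      assume "\<eta>\<^sup>2 < y\<^sup>2"
      then have "\<eta>\<^sup>2 < \<bar>y\<bar>\<^sup>2" by simp
      then show "\<eta> < \<bar>y\<bar>" using power_less_imp_less_base by fastforce
    qed
    have Ytail: "(\<Sum>p\<in>I n. expectation (\<lambda>x. (Y n p x)\<^sup>2 * indicator {x. \<eta> < \<bar>Y n p x\<bar>} x))
        = (\<Sum>l\<le>A.L n. A.Tm G \<eta> n l)" if eta: "\<eta> > 0" for \<eta> n
    proof -
      have pt: "expectation (\<lambda>x. (Y n (l, i) x)\<^sup>2 * indicator {x. \<eta> < \<bar>Y n (l, i) x\<bar>} x)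
          = G l (\<eta>\<^sup>2 * (real (A.Mn n l))\<^sup>2 * A.\<sigma>2 n) / ((real (A.Mn n l))\<^sup>2 * A.\<sigma>2 n)"
        if i: "i \<ge> 1" for l i
      proof -
        define thr where "thr = \<eta>\<^sup>2 * (real (A.Mn n l))\<^sup>2 * A.\<sigma>2 n"
        define c where "c = (real (A.Mn n l))\<^sup>2 * A.\<sigma>2 n"
        have c: "c > 0" unfolding c_def using Mp[of n l] sig[of n] by simp
        have Yeq: "(Y n (l, i) x)\<^sup>2 = (D l i x - m l)\<^sup>2 / c" for x
          unfolding Y2 Z_def c_def by (simp add: power_divide)
        have "(\<lambda>x. (Y n (l, i) x)\<^sup>2 * indicator {x. \<eta> < \<bar>Y n (l, i) x\<bar>} x)
           = (\<lambda>x. (D l i x - m l)\<^sup>2 * indicator {x. thr < (D l i x - m l)\<^sup>2} x / c)"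
        proof
          fix x
          have "\<eta> < \<bar>Y n (l, i) x\<bar> \<longleftrightarrow> \<eta>\<^sup>2 < (Y n (l, i) x)\<^sup>2" using sq_less eta by simp
          also have "\<dots> \<longleftrightarrow> thr < (D l i x - m l)\<^sup>2"
            unfolding Yeq thr_def using c by (simp add: c_def pos_less_divide_eq mult.assoc)
          finally show "(Y n (l, i) x)\<^sup>2 * indicator {x. \<eta> < \<bar>Y n (l, i) x\<bar>} x
             = (D l i x - m l)\<^sup>2 * indicator {x. thr < (D l i x - m l)\<^sup>2} x / c"
            unfolding Yeq by (simp add: indicator_def)
        qed
        then show ?thesis unfolding thr_def[symmetric] c_def[symmetric]
          using D_tail(2)[OF i, of l thr] by simp
      qed
      have "(\<Sum>p\<in>I n. expectation (\<lambda>x. (Y n p x)\<^sup>2 * indicator {x. \<eta> < \<bar>Y n p x\<bar>} x))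
         = (\<Sum>l\<le>A.L n. \<Sum>i\<in>{1..A.Mn n l}. expectation (\<lambda>x. (Y n (l, i) x)\<^sup>2 * indicator {x. \<eta> < \<bar>Y n (l, i) x\<bar>} x))"
        unfolding I_def by (subst sum.Sigma) auto
      also have "\<dots> = (\<Sum>l\<le>A.L n. A.Tm G \<eta> n l)"
      proof (rule sum.cong)
        fix l
        have "(\<Sum>i\<in>{1..A.Mn n l}. expectation (\<lambda>x. (Y n (l, i) x)\<^sup>2 * indicator {x. \<eta> < \<bar>Y n (l, i) x\<bar>} x))
          = (\<Sum>i\<in>{1..A.Mn n l}. G l (\<eta>\<^sup>2 * (real (A.Mn n l))\<^sup>2 * A.\<sigma>2 n) / ((real (A.Mn n l))\<^sup>2 * A.\<sigma>2 n))"
          using pt by (intro sum.cong) auto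
        also have "\<dots> = A.Tm G \<eta> n l"
          unfolding A.Tm_def using Mp[of n l] sig[of n] by (simp add: power2_eq_square)
        finally show "(\<Sum>i\<in>{1..A.Mn n l}. expectation (\<lambda>x. (Y n (l, i) x)\<^sup>2 * indicator {x. \<eta> < \<bar>Y n (l, i) x\<bar>} x)) = A.Tm G \<eta> n l" .
      qed simp
      finally show ?thesis .
    qed
    have main: "weak_conv_m (\<lambda>n. distr M borel (\<lambda>x. \<Sum>p\<in>I n. Y n p x)) std_normal_distribution"
    proof (rule lindeberg_clt[OF I_fin Yind Ysq Ymean Yvar])
      fix \<eta> :: real assume eta: "\<eta> > 0"
      have ci: "\<beta> = \<gamma> \<Longrightarrow> filterlim (mlmc_S V C) at_top sequentially \<and>
        (\<forall>\<nu>>0. (\<lambda>l. if V l > 0 then G l (V l * (\<nu> * (mlmc_S V C l)\<^sup>2 * exp ((2 * \<alpha> - \<gamma>) * real l))) / V l else 0) \<longlonglongrightarrow> 0)"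
        using case_i hyp by blast
      have cii: "\<gamma> > \<beta> \<Longrightarrow> \<beta> < 2 * \<alpha> \<and>
        (\<forall>\<nu>>0. (\<lambda>l. if V l > 0 then G l (V l * (\<nu> * (mlmc_S V C l)\<^sup>2 * exp ((2 * \<alpha> - \<gamma>) * real l))) / V l else 0) \<longlonglongrightarrow> 0) \<and>
        (\<exists>\<upsilon>. \<beta> \<le> \<upsilon> \<and> \<upsilon> < 2 * \<alpha> \<and> liminf (\<lambda>k. ereal (mlmc_S V C k * exp ((\<upsilon> - \<gamma>) * real k / 2))) > 1)"
        using case_ii hyp by blast
      have "(\<lambda>n. \<Sum>l\<le>A.L n. A.Tm G \<eta> n l) \<longlonglongrightarrow> 0"
        by (rule A.lind_analysis[where G=G and \<eta>=\<eta>, OF Gnn GV Gmono Glim eta ci cii])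
      then show "(\<lambda>n. \<Sum>p\<in>I n. expectation (\<lambda>x. (Y n p x)\<^sup>2 * indicator {x. \<eta> < \<bar>Y n p x\<bar>} x)) \<longlonglongrightarrow> 0"
        using Ytail[OF eta] by simp
    qed
    show ?thesis unfolding feq by (rule main)
  qed
qed


end
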